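(* Let $R=\{(1,1),(2,1),(1,2),(1,3),(1,4)\}$. Then: (1) for all integers $n>1$, $\mathcal{S}(n)\subseteq R$; (2) for every $(\alpha,\beta)\in R$ there exists an $n$ with $(\alpha,\beta)\in\mathcal{S}(n)$; (3) the set of positive integers $n$ with $\mathcal{S}(n)=\{(1,1)\}$ has density $1$, i.e. $\lim_{N\to\infty}N^{-1}|\{n\le N:\mathcal{S}(n)=\{(1,1)\}\}|=1$.
   Context: For relatively prime positive integers $\alpha,\beta$ and positive integers $a_1,a_2$, the $(\alpha,\beta)$-walk $w^{\alpha,\beta}_k(a_1,a_2)$ is given by $w_1=a_1$, $w_2=a_2$, $w_{k+2}=\alpha w_{k+1}+\beta w_k$ ($k\ge1$). For a positive integer $n$, $s^{\alpha,\beta}(n;a_1,a_2)$ is the (largest) index $s$ with $w^{\alpha,\beta}_s(a_1,a_2)=n$ ($-\infty$ if none), and $s^{\alpha,\beta}(n)=\max_{a_1,a_2\ge1}s^{\alpha,\beta}(n;a_1,a_2)$. Define $\bar s(n)=\max\{s^{\alpha,\beta}(n):\alpha,\beta\ge1,\gcd(\alpha,\beta)=1\}$ and $\mathcal{S}(n)=\{(\alpha,\beta):\alpha,\beta\ge1,\ \gcd(\alpha,\beta)=1,\ s^{\alpha,\beta}(n)=\bar s(n)\}$. *)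

theory Defs
  imports Complex_Main "HOL-Library.Extended_Real"
begin

text \<open>The (alpha,beta)-walk, indexed from 1: walk al be a1 a2 1 = a1, walk al be a1 a2 2 = a2,
  w(k+2) = al * w(k+1) + be * w(k). Index 0 is unused (value 0).\<close>
fun walk :: "nat \<Rightarrow> nat \<Rightarrow> nat \<Rightarrow> nat \<Rightarrow> nat \<Rightarrow> nat" where
  "walk al be a1 a2 0 = 0"
| "walk al be a1 a2 (Suc 0) = a1"
| "walk al be a1 a2 (Suc (Suc 0)) = a2"
| "walk al be a1 a2 (Suc (Suc (Suc k))) =
     al * walk al be a1 a2 (Suc (Suc k)) + be * walk al be a1 a2 (Suc k)"

definition s_pt :: "nat \<Rightarrow> nat \<Rightarrow> nat \<Rightarrow> nat \<Rightarrow> nat \<Rightarrow> ereal" where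
  "s_pt al be n a1 a2 =
     (if {k. 1 \<le> k \<and> walk al be a1 a2 k = n} = {} then -\<infinity>
      else ereal (real (Max {k. 1 \<le> k \<and> walk al be a1 a2 k = n})))"

text \<open>s^{al,be}(n) = max over a1,a2 \<ge> 1 (written as a supremum; the maximum is attained).\<close>
definition s_ab :: "nat \<Rightarrow> nat \<Rightarrow> nat \<Rightarrow> ereal" where
  "s_ab al be n = (SUP p\<in>{(a1, a2). 1 \<le> a1 \<and> 1 \<le> a2}. s_pt al be n (fst p) (snd p))"

definition s_bar :: "nat \<Rightarrow> ereal" where
  "s_bar n = (SUP p\<in>{(al, be). 1 \<le> al \<and> 1 \<le> be \<and> coprime al be}. s_ab (fst p) (snd p) n)"

definition S_set :: "nat \<Rightarrow> (nat \<times> nat) set" where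
  "S_set n = {(al, be). 1 \<le> al \<and> 1 \<le> be \<and> coprime al be \<and> s_ab al be n = s_bar n}"

end

theory Submission
  imports Defs "HOL-Number_Theory.Number_Theory"
begin


lemma walk_lin: "walk al be a1 a2 k = a1 * walk al be 1 0 k + a2 * walk al be 0 1 k"
  by (induction al be a1 a2 k rule: walk.induct) (auto simp: algebra_simps)

lemma walk_SSS: "walk al be a1 a2 (Suc (Suc (Suc k))) = al * walk al be a1 a2 (Suc (Suc k)) + be * walk al be a1 a2 (Suc k)"
  by simp

lemma walk_basic:
  assumes "1 \<le> al" "1 \<le> be" "1 \<le> a1" "1 \<le> a2" "1 \<le> k"
  shows "1 \<le> walk al be a1 a2 k \<and> k \<le> walk al be a1 a2 k + 1"
  using assms(5)
proof (induction k rule: less_induct)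
  case (less k)
  show ?case
  proof (cases k)
    case 0 then show ?thesis using less by simp
  next
    case (Suc m) note m = this
    show ?thesis
    proof (cases m)
      case 0 then show ?thesis using m assms by simp
    next
      case (Suc m') note m' = this
      show ?thesis
      proof (cases m')
        case 0 then show ?thesis using m m' assms by simp
      next
        case (Suc q)
        have h1: "1 \<le> walk al be a1 a2 (Suc (Suc q)) \<and> Suc (Suc q) \<le> walk al be a1 a2 (Suc (Suc q)) + 1"
          using less.IH[of "Suc (Suc q)"] m m' Suc by simp
        have h2: "1 \<le> walk al be a1 a2 (Suc q) \<and> Suc q \<le> walk al be a1 a2 (Suc q) + 1"
          using less.IH[of "Suc q"] m m' Suc by simp
        have "al * walk al be a1 a2 (Suc (Suc q)) \<ge> walk al be a1 a2 (Suc (Suc q))"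
          using assms(1) by simp
        moreover have "be * walk al be a1 a2 (Suc q) \<ge> walk al be a1 a2 (Suc q)"
          using assms(2) by simp
        moreover have "walk al be a1 a2 k = al * walk al be a1 a2 (Suc (Suc q)) + be * walk al be a1 a2 (Suc q)"
          using m m' Suc by simp
        ultimately show ?thesis using h1 h2 m m' Suc by linarith
      qed
    qed
  qed
qed

lemma walk_mono:
  assumes "al \<le> al'" "be \<le> be'" "a1 \<le> a1'" "a2 \<le> a2'"
  shows "walk al be a1 a2 k \<le> walk al' be' a1' a2' k"
proof (induction k rule: less_induct)
  case (less k)
  show ?case
  proof (cases k)
    case 0 then show ?thesis by simp
  next
    case (Suc m) note m = this
    show ?thesis
    proof (cases m)
      case 0 then show ?thesis using m assms by simp
    next
      case (Suc m') note m' = this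
      show ?thesis
      proof (cases m')
        case 0 then show ?thesis using m m' assms by simp
      next
        case (Suc q)
        have h1: "walk al be a1 a2 (Suc (Suc q)) \<le> walk al' be' a1' a2' (Suc (Suc q))"
          using less.IH[of "Suc (Suc q)"] m m' Suc by simp
        have h2: "walk al be a1 a2 (Suc q) \<le> walk al' be' a1' a2' (Suc q)"
          using less.IH[of "Suc q"] m m' Suc by simp
        have "al * walk al be a1 a2 (Suc (Suc q)) \<le> al' * walk al' be' a1' a2' (Suc (Suc q))"
          using assms(1) h1 by (simp add: mult_mono)
        moreover have "be * walk al be a1 a2 (Suc q) \<le> be' * walk al' be' a1' a2' (Suc q)"
          using assms(2) h2 by (simp add: mult_mono)
        ultimately show ?thesis using m m' Suc by simp
      qed
    qed
  qed
qed

lemma walk_shift: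
  assumes "1 \<le> j"
  shows "walk al be a1 a2 (j + d) = walk al be (walk al be a1 a2 (Suc d)) (walk al be a1 a2 (Suc (Suc d))) j"
  using assms
proof (induction j rule: less_induct)
  case (less j)
  show ?case
  proof (cases j)
    case 0 then show ?thesis using less by simp
  next
    case (Suc m) note m = this
    show ?thesis
    proof (cases m)
      case 0 then show ?thesis using m by simp
    next
      case (Suc m') note m' = this
      show ?thesis
      proof (cases m')
        case 0 then show ?thesis using m m' by simp
      next
        case (Suc q)
        have h1: "walk al be a1 a2 (Suc (Suc q) + d) = walk al be (walk al be a1 a2 (Suc d)) (walk al be a1 a2 (Suc (Suc d))) (Suc (Suc q))"
          using less.IH[of "Suc (Suc q)"] m m' Suc by simp
        have h2: "walk al be a1 a2 (Suc q + d) = walk al be (walk al be a1 a2 (Suc d)) (walk al be a1 a2 (Suc (Suc d))) (Suc q)"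
          using less.IH[of "Suc q"] m m' Suc by simp
        have "walk al be a1 a2 (j + d) = al * walk al be a1 a2 (Suc (Suc q) + d) + be * walk al be a1 a2 (Suc q + d)"
          using m m' Suc by simp
        then show ?thesis using h1 h2 m m' Suc by simp
      qed
    qed
  qed
qed

lemma walk_fib: "walk 1 1 a1 a2 (Suc (Suc k)) = fib k * a1 + fib (Suc k) * a2"
proof (induction k rule: less_induct)
  case (less k)
  show ?case
  proof (cases k)
    case 0 then show ?thesis by simp
  next
    case (Suc m) note m = this
    show ?thesis
    proof (cases m)
      case 0 then show ?thesis using m by simp
    next
      case (Suc q)
      have h1: "walk 1 1 a1 a2 (Suc (Suc (Suc q))) = fib (Suc q) * a1 + fib (Suc (Suc q)) * a2"
        using less.IH[of "Suc q"] m Suc by simp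
      have h2: "walk 1 1 a1 a2 (Suc (Suc q)) = fib q * a1 + fib (Suc q) * a2"
        using less.IH[of q] m Suc by simp
      show ?thesis using h1 h2 m Suc by (simp add: algebra_simps)
    qed
  qed
qed




definition idx :: "nat \<Rightarrow> nat \<Rightarrow> nat \<Rightarrow> nat set" where
  "idx al be n = {k. 1 \<le> k \<and> (\<exists>a1 a2. 1 \<le> a1 \<and> 1 \<le> a2 \<and> walk al be a1 a2 k = n)}"

definition sig :: "nat \<Rightarrow> nat \<Rightarrow> nat \<Rightarrow> nat" where
  "sig al be n = Max (idx al be n)"

lemma idx_finite:
  assumes "1 \<le> al" "1 \<le> be"
  shows "finite (idx al be n)"
proof -
  have "idx al be n \<subseteq> {..n+1}"
  proof
    fix k assume "k \<in> idx al be n"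
    then obtain a1 a2 where "1 \<le> k" "1 \<le> a1" "1 \<le> a2" "walk al be a1 a2 k = n"
      unfolding idx_def by blast
    then show "k \<in> {..n+1}" using walk_basic[OF assms, of a1 a2 k] by simp
  qed
  then show ?thesis using finite_subset by blast
qed

lemma idx_2: "1 \<le> n \<Longrightarrow> 2 \<in> idx al be n"
proof -
  assume "1 \<le> n"
  moreover have "walk al be 1 n 2 = n" by (simp add: numeral_2_eq_2)
  ultimately show ?thesis unfolding idx_def by force
qed

lemma sig_ge:
  assumes "1 \<le> al" "1 \<le> be" "1 \<le> k" "1 \<le> a1" "1 \<le> a2" "walk al be a1 a2 k = n"
  shows "k \<le> sig al be n"
proof -
  have "k \<in> idx al be n" using assms unfolding idx_def by blast
  then show ?thesis unfolding sig_def using idx_finite[OF assms(1,2)] by simp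
qed

lemma sig_in:
  assumes "1 \<le> al" "1 \<le> be" "1 \<le> n"
  shows "sig al be n \<in> idx al be n"
  unfolding sig_def using idx_finite[OF assms(1,2)] idx_2[OF assms(3)]
  by (intro Max_in) auto

lemma sig_ge2:
  assumes "1 \<le> al" "1 \<le> be" "1 \<le> n"
  shows "2 \<le> sig al be n"
  unfolding sig_def using idx_finite[OF assms(1,2)] idx_2[OF assms(3)] by simp

lemma sig_shift:
  assumes "1 \<le> al" "1 \<le> be" "1 \<le> n" "1 \<le> m" "m \<le> sig al be n"
  shows "\<exists>b1 b2. 1 \<le> b1 \<and> 1 \<le> b2 \<and> walk al be b1 b2 m = n"
proof -
  obtain a1 a2 where a: "1 \<le> a1" "1 \<le> a2" "walk al be a1 a2 (sig al be n) = n"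
    using sig_in[OF assms(1-3)] unfolding idx_def by blast
  define d where "d = sig al be n - m"
  have e: "sig al be n = m + d" using assms(5) d_def by simp
  have "walk al be a1 a2 (m + d) = walk al be (walk al be a1 a2 (Suc d)) (walk al be a1 a2 (Suc (Suc d))) m"
    by (rule walk_shift[OF assms(4)])
  moreover have "1 \<le> walk al be a1 a2 (Suc d)" using walk_basic[OF assms(1,2) a(1,2), of "Suc d"] by simp
  moreover have "1 \<le> walk al be a1 a2 (Suc (Suc d))" using walk_basic[OF assms(1,2) a(1,2), of "Suc (Suc d)"] by simp
  ultimately show ?thesis using a(3) e by metis
qed

lemma sig_le:
  assumes "1 \<le> al" "1 \<le> be" "1 \<le> n" "1 \<le> K"
    and "\<And>b1 b2. 1 \<le> b1 \<Longrightarrow> 1 \<le> b2 \<Longrightarrow> walk al be b1 b2 (Suc K) \<noteq> n"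
  shows "sig al be n \<le> K"
proof (rule ccontr)
  assume "\<not> sig al be n \<le> K"
  then have "Suc K \<le> sig al be n" by simp
  from sig_shift[OF assms(1-3) _ this] assms(5) show False by auto
qed

lemma sig_le_size:
  assumes "1 \<le> al" "1 \<le> be" "1 \<le> n" "1 \<le> K" "n < walk al be 1 1 (Suc K)"
  shows "sig al be n \<le> K"
proof (rule sig_le[OF assms(1-4)])
  fix b1 b2 :: nat assume "1 \<le> b1" "1 \<le> b2"
  then have "walk al be 1 1 (Suc K) \<le> walk al be b1 b2 (Suc K)" by (intro walk_mono) auto
  then show "walk al be b1 b2 (Suc K) \<noteq> n" using assms(5) by simp
qed

lemma s_pt_le:
  assumes "1 \<le> al" "1 \<le> be" "1 \<le> a1" "1 \<le> a2"
  shows "s_pt al be n a1 a2 \<le> ereal (real (sig al be n))"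
proof (cases "{k. 1 \<le> k \<and> walk al be a1 a2 k = n} = {}")
  case True then show ?thesis unfolding s_pt_def by simp
next
  case False
  have fin: "finite {k. 1 \<le> k \<and> walk al be a1 a2 k = n}"
  proof (rule finite_subset[OF _ idx_finite[OF assms(1,2), of n]])
    show "{k. 1 \<le> k \<and> walk al be a1 a2 k = n} \<subseteq> idx al be n"
      unfolding idx_def using assms(3,4) by blast
  qed
  have "Max {k. 1 \<le> k \<and> walk al be a1 a2 k = n} \<in> {k. 1 \<le> k \<and> walk al be a1 a2 k = n}"
    using fin False by (rule Max_in)
  then have "Max {k. 1 \<le> k \<and> walk al be a1 a2 k = n} \<le> sig al be n"
    using sig_ge[OF assms(1,2) _ assms(3,4)] by auto
  then show ?thesis using False unfolding s_pt_def by simp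
qed

lemma s_pt_ge:
  assumes "1 \<le> al" "1 \<le> be" "1 \<le> a1" "1 \<le> a2" "1 \<le> k" "walk al be a1 a2 k = n"
  shows "ereal (real k) \<le> s_pt al be n a1 a2"
proof -
  have fin: "finite {k. 1 \<le> k \<and> walk al be a1 a2 k = n}"
  proof (rule finite_subset[OF _ idx_finite[OF assms(1,2), of n]])
    show "{k. 1 \<le> k \<and> walk al be a1 a2 k = n} \<subseteq> idx al be n"
      unfolding idx_def using assms(3,4) by blast
  qed
  have mem: "k \<in> {k. 1 \<le> k \<and> walk al be a1 a2 k = n}" using assms by simp
  then have "k \<le> Max {k. 1 \<le> k \<and> walk al be a1 a2 k = n}" using fin by simp
  then show ?thesis using mem unfolding s_pt_def by auto
qed

lemma s_ab_eq:
  assumes "1 \<le> al" "1 \<le> be" "1 \<le> n"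
  shows "s_ab al be n = ereal (real (sig al be n))"
proof (rule antisym)
  show "s_ab al be n \<le> ereal (real (sig al be n))"
    unfolding s_ab_def by (rule SUP_least) (auto intro: s_pt_le[OF assms(1,2)])
next
  obtain a1 a2 where a: "1 \<le> a1" "1 \<le> a2" "walk al be a1 a2 (sig al be n) = n" "1 \<le> sig al be n"
    using sig_in[OF assms] unfolding idx_def by blast
  have "ereal (real (sig al be n)) \<le> s_pt al be n (fst (a1,a2)) (snd (a1,a2))"
    using s_pt_ge[OF assms(1,2) a(1,2) a(4) a(3)] by simp
  also have "\<dots> \<le> s_ab al be n" unfolding s_ab_def
    by (rule SUP_upper) (use a in auto)
  finally show "ereal (real (sig al be n)) \<le> s_ab al be n" .
qed

definition valid :: "nat \<times> nat \<Rightarrow> bool" where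
  "valid p = (1 \<le> fst p \<and> 1 \<le> snd p \<and> coprime (fst p) (snd p))"

lemma S_mem:
  assumes "1 \<le> n" "1 \<le> al" "1 \<le> be" "coprime al be"
    and "\<And>a b. 1 \<le> a \<Longrightarrow> 1 \<le> b \<Longrightarrow> coprime a b \<Longrightarrow> sig a b n \<le> sig al be n"
  shows "(al, be) \<in> S_set n"
proof -
  have "s_bar n = s_ab al be n"
    unfolding s_bar_def
  proof (rule antisym)
    show "(SUP p\<in>{(al, be). 1 \<le> al \<and> 1 \<le> be \<and> coprime al be}. s_ab (fst p) (snd p) n) \<le> s_ab al be n"
    proof (rule SUP_least)
      fix p :: "nat \<times> nat" assume "p \<in> {(al, be). 1 \<le> al \<and> 1 \<le> be \<and> coprime al be}"
      then obtain a b where p: "p = (a, b)" "1 \<le> a" "1 \<le> b" "coprime a b" by auto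
      have h: "sig a b n \<le> sig al be n" using assms(5) p by blast
      have e1: "s_ab a b n = ereal (real (sig a b n))" by (rule s_ab_eq) (use p assms in auto)
      have e2: "s_ab al be n = ereal (real (sig al be n))" by (rule s_ab_eq) (use p assms in auto)
      show "s_ab (fst p) (snd p) n \<le> s_ab al be n"
        using p h e1 e2 by simp
    qed
    show "s_ab al be n \<le> (SUP p\<in>{(al, be). 1 \<le> al \<and> 1 \<le> be \<and> coprime al be}. s_ab (fst p) (snd p) n)"
      by (rule SUP_upper2[of "(al,be)"]) (use assms in auto)
  qed
  then show ?thesis unfolding S_set_def using assms by simp
qed

lemma S_only:
  assumes "1 \<le> n"
    and "\<And>a b. 1 \<le> a \<Longrightarrow> 1 \<le> b \<Longrightarrow> coprime a b \<Longrightarrow> (a, b) \<noteq> (1, 1) \<Longrightarrow> sig a b n < sig 1 1 n"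
  shows "S_set n = {(1, 1)}"
proof -
  have le: "sig a b n \<le> sig 1 1 n" if "1 \<le> a" "1 \<le> b" "coprime a b" for a b :: nat
  proof (cases "(a, b) = (1, 1)")
    case True then show ?thesis by simp
  next
    case False then show ?thesis using assms(2)[OF that False] by simp
  qed
  have "s_bar n = s_ab 1 1 n"
    unfolding s_bar_def
  proof (rule antisym)
    show "(SUP p\<in>{(al, be). 1 \<le> al \<and> 1 \<le> be \<and> coprime al be}. s_ab (fst p) (snd p) n) \<le> s_ab 1 1 n"
    proof (rule SUP_least)
      fix p :: "nat \<times> nat" assume "p \<in> {(al, be). 1 \<le> al \<and> 1 \<le> be \<and> coprime al be}"
      then obtain a b :: nat where p: "p = (a, b)" "1 \<le> a" "1 \<le> b" "coprime a b" by auto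
      have h: "sig a b n \<le> sig 1 1 n" using le p by blast
      have e1: "s_ab a b n = ereal (real (sig a b n))" by (rule s_ab_eq) (use p assms in auto)
      have e2: "s_ab 1 1 n = ereal (real (sig 1 1 n))" by (rule s_ab_eq) (use p assms in auto)
      show "s_ab (fst p) (snd p) n \<le> s_ab 1 1 n"
        using p h e1 e2 by simp
    qed
    show "s_ab 1 1 n \<le> (SUP p\<in>{(al, be). 1 \<le> al \<and> 1 \<le> be \<and> coprime al be}. s_ab (fst p) (snd p) n)"
      by (rule SUP_upper2[of "(1,1)"]) auto
  qed
  then show ?thesis unfolding S_set_def using assms
    by (auto simp: s_ab_eq) (metis less_irrefl)+
qed




fun witer :: "nat \<Rightarrow> nat \<Rightarrow> nat \<Rightarrow> nat \<Rightarrow> nat \<Rightarrow> nat" where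
  "witer al be x y 0 = x"
| "witer al be x y (Suc k) = witer al be y (al * y + be * x) k"

lemma walk_witer: "walk al be a1 a2 (Suc k) = witer al be a1 a2 k"
proof (induction k arbitrary: a1 a2)
  case 0 then show ?case by simp
next
  case (Suc k)
  have "walk al be a1 a2 (Suc k + 1) = walk al be (walk al be a1 a2 (Suc 1)) (walk al be a1 a2 (Suc (Suc 1))) (Suc k)"
    by (rule walk_shift) simp
  then have "walk al be a1 a2 (Suc (Suc k)) = walk al be a2 (al * a2 + be * a1) (Suc k)"
    by simp
  then show ?case using Suc by simp
qed

lemma frob:
  fixes a b n :: nat
  assumes "coprime a b" "1 \<le> a" "1 \<le> b" "a * b < n"
  shows "\<exists>x y. 1 \<le> x \<and> 1 \<le> y \<and> a * x + b * y = n"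
proof -
  obtain u where u: "[b * u = Suc 0] (mod a)"
    using cong_solve_coprime_nat[of b a] assms(1) by (auto simp: coprime_commute)
  define y0 where "y0 = (n * u) mod a"
  define y where "y = (if y0 = 0 then a else y0)"
  have y0a: "y0 < a" using assms(2) unfolding y0_def by simp
  have y1: "1 \<le> y" "y \<le> a" using y0a assms(2) unfolding y_def by auto
  have ymod: "y mod a = (n * u) mod a"
    using y0a unfolding y_def y0_def by auto
  have bu: "(b * u) mod a = 1 mod a" using u unfolding cong_def by simp
  have "(b * y) mod a = (b * (n * u)) mod a"
    using ymod by (metis mod_mult_right_eq)
  also have "\<dots> = ((b * u) * n) mod a" by (simp add: ac_simps)
  also have "\<dots> = ((1 mod a) * n) mod a" using bu by (metis mod_mult_left_eq)
  also have "\<dots> = n mod a" by (metis mod_mult_left_eq mult_1)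
  finally have bymod: "(b * y) mod a = n mod a" .
  have "b * y \<le> b * a" by (rule mult_le_mono2[OF y1(2)])
  then have byn: "b * y < n" using assms(4) by (metis le_less_trans mult.commute)
  then have "a dvd (n - b * y)" using bymod
    by (metis less_or_eq_imp_le mod_eq_dvd_iff_nat)
  then obtain x where x: "n - b * y = a * x" by (auto elim: dvdE)
  have "x \<noteq> 0" proof assume "x = 0" then show False using x byn by simp qed
  then show ?thesis using x y1 byn by (intro exI[of _ x] exI[of _ y]) auto
qed




lemma sq_le: "(x + y) ^ 2 \<le> 2 * x ^ 2 + 2 * (y::nat) ^ 2"
proof -
  have "0 \<le> (int x - int y) ^ 2" by simp
  then have "int ((x + y) ^ 2) \<le> int (2 * x ^ 2 + 2 * y ^ 2)"
    by (simp add: power2_eq_square algebra_simps)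
  then show ?thesis by linarith
qed

lemma fib_sq: "fib k ^ 2 \<le> 3 ^ k"
proof (induction k rule: fib.induct)
  case 1 then show ?case by simp
next
  case 2 then show ?case by simp
next
  case (3 m)
  have "fib (Suc (Suc m)) ^ 2 = (fib (Suc m) + fib m) ^ 2" by simp
  also have "\<dots> \<le> 2 * fib (Suc m) ^ 2 + 2 * fib m ^ 2"
    by (rule sq_le)
  also have "\<dots> \<le> 2 * 3 ^ Suc m + 2 * 3 ^ m" using 3 by simp
  also have "\<dots> \<le> 3 ^ Suc (Suc m)" by simp
  finally show ?case .
qed

lemma fib_le2: "fib (Suc (Suc m)) \<le> 2 * fib (Suc m)"
  using fib_Suc_mono[of m] by simp

lemma P_step:
  assumes "4 \<le> k"
  shows "10 * (fib k * fib (Suc k)) \<le> 27 * (fib (k - 1) * fib k)"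
proof -
  obtain m where m: "k = m + 4" using assms by (metis add.commute le_Suc_ex)
  have a: "fib (Suc (Suc (Suc m))) \<le> 2 * fib (Suc (Suc m))" by (rule fib_le2)
  have "10 * fib (Suc k) \<le> 27 * fib (k - 1)"
    using a fib_Suc_mono[of m] by (simp add: m numeral_eq_Suc)
  then show ?thesis by (simp add: algebra_simps)
qed

lemma grow:
  fixes h :: "nat \<Rightarrow> nat"
  assumes "4 \<le> k0" "\<And>k. k0 \<le> k \<Longrightarrow> 27 * h k \<le> 10 * h (Suc k)"
    "fib (k0 - 1) * fib k0 < h k0" "k0 \<le> k"
  shows "fib (k - 1) * fib k < h k"
  using assms(4)
proof (induction k rule: dec_induct)
  case base then show ?case using assms(3) by simp
next
  case (step k)
  have "10 * (fib k * fib (Suc k)) \<le> 27 * (fib (k - 1) * fib k)"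
    using P_step[of k] step assms(1) by simp
  also have "\<dots> < 27 * h k" using step by simp
  also have "\<dots> \<le> 10 * h (Suc k)" using assms(2) step by simp
  finally show ?case by simp
qed




lemma walk_num: "walk al be a1 a2 (numeral n) = witer al be a1 a2 (pred_numeral n)"
  by (simp add: numeral_eq_Suc walk_witer)

lemma witer_num: "witer al be x y (numeral n) = witer al be y (al * y + be * x) (pred_numeral n)"
  by (simp add: numeral_eq_Suc)

lemmas wcomp = walk_num witer_num


lemma core31: "3 \<le> k \<Longrightarrow> fib (k - 1) * fib k < walk 3 1 1 1 k"
proof -
  assume k: "3 \<le> k"
  have inv: "27 * walk 3 1 1 1 k \<le> 10 * walk 3 1 1 1 (Suc k)" if "4 \<le> k" for k
  proof -
    define m where "m = k - 2"
    have m: "k = Suc (Suc m)" using that unfolding m_def by arith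
    show ?thesis unfolding m by simp
  qed
  have b3: "walk 3 1 1 1 3 = 4" by (simp add: wcomp)
  have b4: "walk 3 1 1 1 4 = 13" by (simp add: wcomp)
  show ?thesis
  proof (cases "k = 3")
    have f: "fib (3 - 1) * fib 3 = 2" by (simp add: numeral_eq_Suc)
    case True then show ?thesis using b3 f by simp
  next
    case False
    then have "4 \<le> k" using k by simp
    have f: "fib (4 - 1) * fib 4 = 6" by (simp add: numeral_eq_Suc)
    show ?thesis
      by (rule grow[of 4 "walk 3 1 1 1" k, OF _ inv]) (use b4 f \<open>4 \<le> k\<close> in auto)
  qed
qed


lemma core22: "3 \<le> k \<Longrightarrow> fib (k - 1) * fib k < walk 2 2 1 1 k"
proof -
  assume k: "3 \<le> k"
  let ?h = "walk 2 2 1 1"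
  have rec: "?h (Suc (Suc k)) = 2 * ?h (Suc k) + 2 * ?h k" if "1 \<le> k" for k
  proof -
    define m where "m = k - 1"
    have m: "k = Suc m" using that unfolding m_def by arith
    show ?thesis unfolding m by simp
  qed
  have invb: "27 * ?h k \<le> 10 * ?h (Suc k) \<and> 4 * ?h (Suc k) \<le> 11 * ?h k" if "5 \<le> k" for k
    using that
  proof (induction k rule: dec_induct)
    case base
    have "?h 5 = 28" "?h (Suc 5) = 76" by (simp_all add: wcomp)
    then show ?case by simp
  next
    case (step k)
    have "?h (Suc (Suc k)) = 2 * ?h (Suc k) + 2 * ?h k" using rec step by simp
    then show ?case using step by linarith
  qed
  have b3: "?h 3 = 4" by (simp add: wcomp)
  have b4: "?h 4 = 10" by (simp add: wcomp)
  have b5: "?h 5 = 28" by (simp add: wcomp)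
  have f3: "fib (3 - 1) * fib 3 = 2" by (simp add: numeral_eq_Suc)
  have f4: "fib (4 - 1) * fib 4 = 6" by (simp add: numeral_eq_Suc)
  have f5: "fib (5 - 1) * fib 5 = 15" by (simp add: numeral_eq_Suc)
  consider "k = 3" | "k = 4" | "5 \<le> k" using k by linarith
  then show ?thesis
  proof cases
    case 1 then show ?thesis using b3 f3 by simp
  next
    case 2 then show ?thesis using b4 f4 by simp
  next
    case 3
    show ?thesis
      by (rule grow[of 5 ?h k]) (use b5 f5 3 invb in auto)
  qed
qed

lemma core15: "3 \<le> k \<Longrightarrow> fib (k - 1) * fib k < walk 1 5 1 1 k"
proof -
  assume k: "3 \<le> k"
  let ?h = "walk 1 5 1 1"
  have rec: "?h (Suc (Suc k)) = ?h (Suc k) + 5 * ?h k" if "1 \<le> k" for k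
  proof -
    define m where "m = k - 1"
    have m: "k = Suc m" using that unfolding m_def by arith
    show ?thesis unfolding m by simp
  qed
  have invb: "27 * ?h k \<le> 10 * ?h (Suc k) \<and> 10 * ?h (Suc k) \<le> 29 * ?h k" if "10 \<le> k" for k
    using that
  proof (induction k rule: dec_induct)
    case base
    have "?h 10 = 6191" "?h (Suc 10) = 17621" by (simp_all add: wcomp)
    then show ?case by simp
  next
    case (step k)
    have "?h (Suc (Suc k)) = ?h (Suc k) + 5 * ?h k" using rec step by simp
    then show ?case using step by linarith
  qed
  have b10: "?h 10 = 6191" by (simp add: wcomp)
  have f10: "fib (10 - 1) * fib 10 = 1870" by (simp add: numeral_eq_Suc)
  show ?thesis
  proof (cases "k < 10")
    case True
    then have "k \<in> {3,4,5,6,7,8,9}" using k by auto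
    then show ?thesis by (auto simp: wcomp numeral_eq_Suc)
  next
    case False
    then show ?thesis
      by (intro grow[of 10 ?h k]) (use b10 f10 invb in auto)
  qed
qed




lemma sig11_ge:
  assumes "2 \<le> j" "fib (j - 1) * fib j < n"
  shows "Suc j \<le> sig 1 1 n"
proof -
  have j: "Suc (j - 1) = j" using assms(1) by simp
  have cop: "coprime (fib (j - 1)) (fib j)" using coprime_fib_Suc_nat[of "j - 1"] j by simp
  have p1: "1 \<le> fib (j - 1)" using fib_neq_0_nat[of "j - 1"] assms(1) by simp
  have p2: "1 \<le> fib j" using fib_neq_0_nat[of j] assms(1) by simp
  obtain x y where xy: "1 \<le> x" "1 \<le> y" "fib (j - 1) * x + fib j * y = n"
    using frob[OF cop p1 p2 assms(2)] by blast
  have "walk 1 1 x y (Suc (Suc (j - 1))) = n" using walk_fib[of x y "j - 1"] xy(3) j by simp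
  then have "walk 1 1 x y (Suc j) = n" using j by simp
  then show ?thesis by (intro sig_ge[of 1 1 "Suc j" x y n]) (use xy in auto)
qed

lemma sig11_3: "2 \<le> n \<Longrightarrow> 3 \<le> sig 1 1 n"
  using sig11_ge[of 2 n] by (simp add: numeral_eq_Suc)

lemma core:
  assumes "1 \<le> al" "1 \<le> be" "(al, be) \<notin> {(1,1),(2,1),(1,2),(1,3),(1,4)}" "3 \<le> k"
  shows "fib (k - 1) * fib k < walk al be 1 1 k"
proof -
  consider "3 \<le> al" | "al = 2" "2 \<le> be" | "al = 1" "5 \<le> be" using assms(1-3) by fastforce
  then show ?thesis
  proof cases
    case 1
    have "walk 3 1 1 1 k \<le> walk al be 1 1 k" by (rule walk_mono) (use 1 assms in auto)
    then show ?thesis using core31[OF assms(4)] by linarith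
  next
    case 2
    have "walk 2 2 1 1 k \<le> walk al be 1 1 k" by (rule walk_mono) (use 2 assms in auto)
    then show ?thesis using core22[OF assms(4)] by linarith
  next
    case 3
    have "walk 1 5 1 1 k \<le> walk al be 1 1 k" by (rule walk_mono) (use 3 assms in auto)
    then show ?thesis using core15[OF assms(4)] by linarith
  qed
qed

lemma key:
  assumes "1 \<le> al" "1 \<le> be" "(al, be) \<notin> {(1,1),(2,1),(1,2),(1,3),(1,4)}" "2 \<le> n"
  shows "sig al be n < sig 1 1 n"
proof -
  let ?K = "sig al be n"
  obtain a1 a2 where a: "1 \<le> ?K" "1 \<le> a1" "1 \<le> a2" "walk al be a1 a2 ?K = n"
  proof -
    have "1 \<le> n" using assms(4) by simp
    from sig_in[OF assms(1,2) this] show ?thesis using that unfolding idx_def by blast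
  qed
  show ?thesis
  proof (cases "?K \<le> 2")
    case True then show ?thesis using sig11_3[OF assms(4)] by linarith
  next
    case False
    then have K3: "3 \<le> ?K" by simp
    have "walk al be 1 1 ?K \<le> walk al be a1 a2 ?K" by (rule walk_mono) (use a in auto)
    then have "fib (?K - 1) * fib ?K < n" using core[OF assms(1-3) K3] a(4) by linarith
    then have "Suc ?K \<le> sig 1 1 n" by (intro sig11_ge) (use K3 in auto)
    then show ?thesis by simp
  qed
qed

lemma part1:
  assumes "1 < n"
  shows "S_set n \<subseteq> {(1,1),(2,1),(1,2),(1,3),(1,4)}"
proof
  fix p assume p: "p \<in> S_set n"
  obtain al be where pe: "p = (al, be)" by (cases p)
  have v: "1 \<le> al" "1 \<le> be" "coprime al be" "s_ab al be n = s_bar n"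
    using p pe unfolding S_set_def by auto
  show "p \<in> {(1,1),(2,1),(1,2),(1,3),(1,4)}"
  proof (rule ccontr)
    assume nR: "p \<notin> {(1,1),(2,1),(1,2),(1,3),(1,4)}"
    have "sig al be n < sig 1 1 n" using key[OF v(1,2) _ ] nR pe assms by auto
    then have "s_ab al be n < s_ab 1 1 n"
      using s_ab_eq[OF v(1,2)] s_ab_eq[of 1 1 n] assms by simp
    moreover have "s_ab 1 1 n \<le> s_bar n" unfolding s_bar_def
      by (rule SUP_upper2[of "(1,1)"]) auto
    ultimately show False using v(4) by simp
  qed
qed

lemma bad:
  assumes "2 \<le> n" "S_set n \<noteq> {(1,1)}"
  shows "\<exists>q\<in>{(2,1),(1,2),(1,3),(1,4)}. sig 1 1 n \<le> sig (fst q) (snd q) n"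
proof (rule ccontr)
  assume c: "\<not> ?thesis"
  have "S_set n = {(1,1)}"
  proof (rule S_only)
    show "1 \<le> n" using assms by simp
    fix a b :: nat assume ab: "1 \<le> a" "1 \<le> b" "coprime a b" "(a, b) \<noteq> (1, 1)"
    show "sig a b n < sig 1 1 n"
    proof (cases "(a, b) \<in> {(2,1),(1,2),(1,3),(1,4)}")
      case True then show ?thesis using c by force
    next
      case False then show ?thesis using key[OF ab(1,2) _ assms(1)] ab(4) by auto
    qed
  qed
  then show False using assms(2) by simp
qed




lemma wstep: "1 \<le> k \<Longrightarrow> walk al be a1 a2 (k + 2) = al * walk al be a1 a2 (k + 1) + be * walk al be a1 a2 k"
proof -
  assume "1 \<le> k"
  then obtain m where "k = Suc m" by (cases k) auto
  then show ?thesis by simp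
qed

lemma nonrep:
  fixes a c n u r b1 b2 :: nat
  assumes "2 \<le> c" "(a * u) mod c = 1" "(n * u) mod c = r" "n < a * (if r = 0 then c else r) + c"
    "1 \<le> b1" "1 \<le> b2"
  shows "a * b1 + c * b2 \<noteq> n"
proof
  assume e: "a * b1 + c * b2 = n"
  have "(n * u) mod c = ((a * u) * b1 + c * (b2 * u)) mod c" unfolding e[symmetric] by (simp add: algebra_simps)
  also have "\<dots> = ((a * u) * b1) mod c" by simp
  also have "\<dots> = (((a * u) mod c) * b1) mod c" by (simp add: mod_mult_left_eq)
  also have "\<dots> = b1 mod c" using assms(2) by simp
  finally have b1r: "b1 mod c = r" using assms(3) by simp
  have "(if r = 0 then c else r) \<le> b1"
  proof (cases "r = 0")
    case True
    then have "c dvd b1" using b1r by (simp add: mod_eq_0_iff_dvd)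
    then show ?thesis using True assms(5) by (simp add: dvd_imp_le)
  next
    case False then show ?thesis using b1r by (metis mod_less_eq_dividend)
  qed
  then have "a * (if r = 0 then c else r) \<le> a * b1" by (rule mult_le_mono2)
  moreover have "c \<le> c * b2" using assms(6) by simp
  ultimately show False using e assms(4) by linarith
qed

lemma sig_le_lin:
  assumes "1 \<le> al" "1 \<le> be" "1 \<le> n" "1 \<le> K"
    "walk al be 1 0 (Suc K) = A" "walk al be 0 1 (Suc K) = B"
    "2 \<le> B" "(A * u) mod B = 1" "(n * u) mod B = r" "n < A * (if r = 0 then B else r) + B"
  shows "sig al be n \<le> K"
proof (rule sig_le[OF assms(1-4)])
  fix b1 b2 :: nat assume b: "1 \<le> b1" "1 \<le> b2"
  have "walk al be b1 b2 (Suc K) = A * b1 + B * b2"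
    using walk_lin[of al be b1 b2 "Suc K"] assms(5,6) by (simp add: ac_simps)
  then show "walk al be b1 b2 (Suc K) \<noteq> n"
    using nonrep[OF assms(7-10) b] by simp
qed

lemma mem_from:
  assumes "2 \<le> n" "1 \<le> al" "1 \<le> be" "coprime al be" "K \<le> sig al be n"
    "sig 1 1 n \<le> K" "sig 2 1 n \<le> K" "sig 1 2 n \<le> K" "sig 1 3 n \<le> K" "sig 1 4 n \<le> K"
  shows "(al, be) \<in> S_set n"
proof (rule S_mem)
  show "1 \<le> n" "1 \<le> al" "1 \<le> be" "coprime al be" using assms by auto
  fix a b :: nat assume ab: "1 \<le> a" "1 \<le> b" "coprime a b"
  show "sig a b n \<le> sig al be n"
  proof (cases "(a, b) \<in> {(1,1),(2,1),(1,2),(1,3),(1,4)}")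
    case True then show ?thesis using assms(5-10) by auto
  next
    case False then show ?thesis using key[OF ab(1,2) False assms(1)] assms(5,6) by linarith
  qed
qed

lemma wit:
  assumes "1 \<le> al" "1 \<le> be" "1 \<le> a1" "1 \<le> a2" "1 \<le> K" "walk al be a1 a2 K = n"
  shows "K \<le> sig al be n"
  using sig_ge[OF assms(1,2,5,3,4,6)] .


lemma ex12: "(1::nat, 2::nat) \<in> S_set 32"
proof (rule mem_from[where K = 6])
  show "6 \<le> sig 1 2 32" by (rule wit[of _ _ 1 2]) (simp_all add: wcomp)
  show "sig 1 1 32 \<le> 6" by (rule sig_le_lin[where A = 5 and B = 8 and u = 5 and r = 0]) (simp_all add: wcomp)
  show "sig 2 1 32 \<le> 6" by (rule sig_le_size) (simp_all add: wcomp)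
  show "sig 1 2 32 \<le> 6" by (rule sig_le_size) (simp_all add: wcomp)
  show "sig 1 3 32 \<le> 6" by (rule sig_le_size) (simp_all add: wcomp)
  show "sig 1 4 32 \<le> 6" by (rule sig_le_size) (simp_all add: wcomp)
qed simp_all


lemma ex11: "(1::nat, 1::nat) \<in> S_set 2"
proof (rule mem_from[where K = 3])
  show "3 \<le> sig 1 1 2" by (rule wit[of _ _ 1 1]) (simp_all add: wcomp)
  show "sig 1 1 2 \<le> 3" by (rule sig_le_size) (simp_all add: wcomp)
  show "sig 2 1 2 \<le> 3" by (rule sig_le_size) (simp_all add: wcomp)
  show "sig 1 2 2 \<le> 3" by (rule sig_le_size) (simp_all add: wcomp)
  show "sig 1 3 2 \<le> 3" by (rule sig_le_size) (simp_all add: wcomp)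
  show "sig 1 4 2 \<le> 3" by (rule sig_le_size) (simp_all add: wcomp)
qed simp_all

lemma ex13: "(1::nat, 3::nat) \<in> S_set 40"
proof (rule mem_from[where K = 6])
  show "6 \<le> sig 1 3 40" by (rule wit[of _ _ 1 1]) (simp_all add: wcomp)
  show "sig 1 1 40 \<le> 6"
    by (rule sig_le_lin[where A = 5 and B = 8 and u = 5 and r = 0]) (simp_all add: wcomp)
  show "sig 2 1 40 \<le> 6" by (rule sig_le_size) (simp_all add: wcomp)
  show "sig 1 2 40 \<le> 6" by (rule sig_le_size) (simp_all add: wcomp)
  show "sig 1 3 40 \<le> 6" by (rule sig_le_size) (simp_all add: wcomp)
  show "sig 1 4 40 \<le> 6" by (rule sig_le_size) (simp_all add: wcomp)
qed simp_all

lemma ex21: "(2::nat, 1::nat) \<in> S_set 239"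
proof (rule mem_from[where K = 8])
  show "8 \<le> sig 2 1 239" by (rule wit[of _ _ 1 1]) (simp_all add: wcomp)
  show "sig 1 1 239 \<le> 8"
    by (rule sig_le_lin[where A = 13 and B = 21 and u = 13 and r = 20]) (simp_all add: wcomp)
  show "sig 2 1 239 \<le> 8" by (rule sig_le_size) (simp_all add: wcomp)
  show "sig 1 2 239 \<le> 8"
    by (rule sig_le_lin[where A = 86 and B = 85 and u = 1 and r = 69]) (simp_all add: wcomp)
  show "sig 1 3 239 \<le> 8" by (rule sig_le_size) (simp_all add: wcomp)
  show "sig 1 4 239 \<le> 8" by (rule sig_le_size) (simp_all add: wcomp)
qed simp_all



lemma wv0: "walk 1 1 1 0 41 = 63245986"
proof -
  have h1: "walk 1 1 1 0 1 = 1" by simp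
  have h2: "walk 1 1 1 0 2 = 0" by (simp add: numeral_2_eq_2)
  have h3: "walk 1 1 1 0 3 = 1" using wstep[of 1 1 1 1 0] h2 h1 by (simp del: One_nat_def)
  have h4: "walk 1 1 1 0 4 = 1" using wstep[of 2 1 1 1 0] h3 h2 by (simp del: One_nat_def)
  have h5: "walk 1 1 1 0 5 = 2" using wstep[of 3 1 1 1 0] h4 h3 by (simp del: One_nat_def)
  have h6: "walk 1 1 1 0 6 = 3" using wstep[of 4 1 1 1 0] h5 h4 by (simp del: One_nat_def)
  have h7: "walk 1 1 1 0 7 = 5" using wstep[of 5 1 1 1 0] h6 h5 by (simp del: One_nat_def)
  have h8: "walk 1 1 1 0 8 = 8" using wstep[of 6 1 1 1 0] h7 h6 by (simp del: One_nat_def)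
  have h9: "walk 1 1 1 0 9 = 13" using wstep[of 7 1 1 1 0] h8 h7 by (simp del: One_nat_def)
  have h10: "walk 1 1 1 0 10 = 21" using wstep[of 8 1 1 1 0] h9 h8 by (simp del: One_nat_def)
  have h11: "walk 1 1 1 0 11 = 34" using wstep[of 9 1 1 1 0] h10 h9 by (simp del: One_nat_def)
  have h12: "walk 1 1 1 0 12 = 55" using wstep[of 10 1 1 1 0] h11 h10 by (simp del: One_nat_def)
  have h13: "walk 1 1 1 0 13 = 89" using wstep[of 11 1 1 1 0] h12 h11 by (simp del: One_nat_def)
  have h14: "walk 1 1 1 0 14 = 144" using wstep[of 12 1 1 1 0] h13 h12 by (simp del: One_nat_def)
  have h15: "walk 1 1 1 0 15 = 233" using wstep[of 13 1 1 1 0] h14 h13 by (simp del: One_nat_def)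
  have h16: "walk 1 1 1 0 16 = 377" using wstep[of 14 1 1 1 0] h15 h14 by (simp del: One_nat_def)
  have h17: "walk 1 1 1 0 17 = 610" using wstep[of 15 1 1 1 0] h16 h15 by (simp del: One_nat_def)
  have h18: "walk 1 1 1 0 18 = 987" using wstep[of 16 1 1 1 0] h17 h16 by (simp del: One_nat_def)
  have h19: "walk 1 1 1 0 19 = 1597" using wstep[of 17 1 1 1 0] h18 h17 by (simp del: One_nat_def)
  have h20: "walk 1 1 1 0 20 = 2584" using wstep[of 18 1 1 1 0] h19 h18 by (simp del: One_nat_def)
  have h21: "walk 1 1 1 0 21 = 4181" using wstep[of 19 1 1 1 0] h20 h19 by (simp del: One_nat_def)
  have h22: "walk 1 1 1 0 22 = 6765" using wstep[of 20 1 1 1 0] h21 h20 by (simp del: One_nat_def)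
  have h23: "walk 1 1 1 0 23 = 10946" using wstep[of 21 1 1 1 0] h22 h21 by (simp del: One_nat_def)
  have h24: "walk 1 1 1 0 24 = 17711" using wstep[of 22 1 1 1 0] h23 h22 by (simp del: One_nat_def)
  have h25: "walk 1 1 1 0 25 = 28657" using wstep[of 23 1 1 1 0] h24 h23 by (simp del: One_nat_def)
  have h26: "walk 1 1 1 0 26 = 46368" using wstep[of 24 1 1 1 0] h25 h24 by (simp del: One_nat_def)
  have h27: "walk 1 1 1 0 27 = 75025" using wstep[of 25 1 1 1 0] h26 h25 by (simp del: One_nat_def)
  have h28: "walk 1 1 1 0 28 = 121393" using wstep[of 26 1 1 1 0] h27 h26 by (simp del: One_nat_def)
  have h29: "walk 1 1 1 0 29 = 196418" using wstep[of 27 1 1 1 0] h28 h27 by (simp del: One_nat_def)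
  have h30: "walk 1 1 1 0 30 = 317811" using wstep[of 28 1 1 1 0] h29 h28 by (simp del: One_nat_def)
  have h31: "walk 1 1 1 0 31 = 514229" using wstep[of 29 1 1 1 0] h30 h29 by (simp del: One_nat_def)
  have h32: "walk 1 1 1 0 32 = 832040" using wstep[of 30 1 1 1 0] h31 h30 by (simp del: One_nat_def)
  have h33: "walk 1 1 1 0 33 = 1346269" using wstep[of 31 1 1 1 0] h32 h31 by (simp del: One_nat_def)
  have h34: "walk 1 1 1 0 34 = 2178309" using wstep[of 32 1 1 1 0] h33 h32 by (simp del: One_nat_def)
  have h35: "walk 1 1 1 0 35 = 3524578" using wstep[of 33 1 1 1 0] h34 h33 by (simp del: One_nat_def)
  have h36: "walk 1 1 1 0 36 = 5702887" using wstep[of 34 1 1 1 0] h35 h34 by (simp del: One_nat_def)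
  have h37: "walk 1 1 1 0 37 = 9227465" using wstep[of 35 1 1 1 0] h36 h35 by (simp del: One_nat_def)
  have h38: "walk 1 1 1 0 38 = 14930352" using wstep[of 36 1 1 1 0] h37 h36 by (simp del: One_nat_def)
  have h39: "walk 1 1 1 0 39 = 24157817" using wstep[of 37 1 1 1 0] h38 h37 by (simp del: One_nat_def)
  have h40: "walk 1 1 1 0 40 = 39088169" using wstep[of 38 1 1 1 0] h39 h38 by (simp del: One_nat_def)
  have h41: "walk 1 1 1 0 41 = 63245986" using wstep[of 39 1 1 1 0] h40 h39 by (simp del: One_nat_def)
  then show ?thesis .
qed


lemma wv1: "walk 1 1 0 1 41 = 102334155"
proof -
  have h1: "walk 1 1 0 1 1 = 0" by simp
  have h2: "walk 1 1 0 1 2 = 1" by (simp add: numeral_2_eq_2)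
  have h3: "walk 1 1 0 1 3 = 1" using wstep[of 1 1 1 0 1] h2 h1 by (simp del: One_nat_def)
  have h4: "walk 1 1 0 1 4 = 2" using wstep[of 2 1 1 0 1] h3 h2 by (simp del: One_nat_def)
  have h5: "walk 1 1 0 1 5 = 3" using wstep[of 3 1 1 0 1] h4 h3 by (simp del: One_nat_def)
  have h6: "walk 1 1 0 1 6 = 5" using wstep[of 4 1 1 0 1] h5 h4 by (simp del: One_nat_def)
  have h7: "walk 1 1 0 1 7 = 8" using wstep[of 5 1 1 0 1] h6 h5 by (simp del: One_nat_def)
  have h8: "walk 1 1 0 1 8 = 13" using wstep[of 6 1 1 0 1] h7 h6 by (simp del: One_nat_def)
  have h9: "walk 1 1 0 1 9 = 21" using wstep[of 7 1 1 0 1] h8 h7 by (simp del: One_nat_def)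
  have h10: "walk 1 1 0 1 10 = 34" using wstep[of 8 1 1 0 1] h9 h8 by (simp del: One_nat_def)
  have h11: "walk 1 1 0 1 11 = 55" using wstep[of 9 1 1 0 1] h10 h9 by (simp del: One_nat_def)
  have h12: "walk 1 1 0 1 12 = 89" using wstep[of 10 1 1 0 1] h11 h10 by (simp del: One_nat_def)
  have h13: "walk 1 1 0 1 13 = 144" using wstep[of 11 1 1 0 1] h12 h11 by (simp del: One_nat_def)
  have h14: "walk 1 1 0 1 14 = 233" using wstep[of 12 1 1 0 1] h13 h12 by (simp del: One_nat_def)
  have h15: "walk 1 1 0 1 15 = 377" using wstep[of 13 1 1 0 1] h14 h13 by (simp del: One_nat_def)
  have h16: "walk 1 1 0 1 16 = 610" using wstep[of 14 1 1 0 1] h15 h14 by (simp del: One_nat_def)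
  have h17: "walk 1 1 0 1 17 = 987" using wstep[of 15 1 1 0 1] h16 h15 by (simp del: One_nat_def)
  have h18: "walk 1 1 0 1 18 = 1597" using wstep[of 16 1 1 0 1] h17 h16 by (simp del: One_nat_def)
  have h19: "walk 1 1 0 1 19 = 2584" using wstep[of 17 1 1 0 1] h18 h17 by (simp del: One_nat_def)
  have h20: "walk 1 1 0 1 20 = 4181" using wstep[of 18 1 1 0 1] h19 h18 by (simp del: One_nat_def)
  have h21: "walk 1 1 0 1 21 = 6765" using wstep[of 19 1 1 0 1] h20 h19 by (simp del: One_nat_def)
  have h22: "walk 1 1 0 1 22 = 10946" using wstep[of 20 1 1 0 1] h21 h20 by (simp del: One_nat_def)
  have h23: "walk 1 1 0 1 23 = 17711" using wstep[of 21 1 1 0 1] h22 h21 by (simp del: One_nat_def)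
  have h24: "walk 1 1 0 1 24 = 28657" using wstep[of 22 1 1 0 1] h23 h22 by (simp del: One_nat_def)
  have h25: "walk 1 1 0 1 25 = 46368" using wstep[of 23 1 1 0 1] h24 h23 by (simp del: One_nat_def)
  have h26: "walk 1 1 0 1 26 = 75025" using wstep[of 24 1 1 0 1] h25 h24 by (simp del: One_nat_def)
  have h27: "walk 1 1 0 1 27 = 121393" using wstep[of 25 1 1 0 1] h26 h25 by (simp del: One_nat_def)
  have h28: "walk 1 1 0 1 28 = 196418" using wstep[of 26 1 1 0 1] h27 h26 by (simp del: One_nat_def)
  have h29: "walk 1 1 0 1 29 = 317811" using wstep[of 27 1 1 0 1] h28 h27 by (simp del: One_nat_def)
  have h30: "walk 1 1 0 1 30 = 514229" using wstep[of 28 1 1 0 1] h29 h28 by (simp del: One_nat_def)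
  have h31: "walk 1 1 0 1 31 = 832040" using wstep[of 29 1 1 0 1] h30 h29 by (simp del: One_nat_def)
  have h32: "walk 1 1 0 1 32 = 1346269" using wstep[of 30 1 1 0 1] h31 h30 by (simp del: One_nat_def)
  have h33: "walk 1 1 0 1 33 = 2178309" using wstep[of 31 1 1 0 1] h32 h31 by (simp del: One_nat_def)
  have h34: "walk 1 1 0 1 34 = 3524578" using wstep[of 32 1 1 0 1] h33 h32 by (simp del: One_nat_def)
  have h35: "walk 1 1 0 1 35 = 5702887" using wstep[of 33 1 1 0 1] h34 h33 by (simp del: One_nat_def)
  have h36: "walk 1 1 0 1 36 = 9227465" using wstep[of 34 1 1 0 1] h35 h34 by (simp del: One_nat_def)
  have h37: "walk 1 1 0 1 37 = 14930352" using wstep[of 35 1 1 0 1] h36 h35 by (simp del: One_nat_def)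
  have h38: "walk 1 1 0 1 38 = 24157817" using wstep[of 36 1 1 0 1] h37 h36 by (simp del: One_nat_def)
  have h39: "walk 1 1 0 1 39 = 39088169" using wstep[of 37 1 1 0 1] h38 h37 by (simp del: One_nat_def)
  have h40: "walk 1 1 0 1 40 = 63245986" using wstep[of 38 1 1 0 1] h39 h38 by (simp del: One_nat_def)
  have h41: "walk 1 1 0 1 41 = 102334155" using wstep[of 39 1 1 0 1] h40 h39 by (simp del: One_nat_def)
  then show ?thesis .
qed


lemma wv2: "walk 2 1 1 0 41 = 299713796309065"
proof -
  have h1: "walk 2 1 1 0 1 = 1" by simp
  have h2: "walk 2 1 1 0 2 = 0" by (simp add: numeral_2_eq_2)
  have h3: "walk 2 1 1 0 3 = 1" using wstep[of 1 2 1 1 0] h2 h1 by (simp del: One_nat_def)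
  have h4: "walk 2 1 1 0 4 = 2" using wstep[of 2 2 1 1 0] h3 h2 by (simp del: One_nat_def)
  have h5: "walk 2 1 1 0 5 = 5" using wstep[of 3 2 1 1 0] h4 h3 by (simp del: One_nat_def)
  have h6: "walk 2 1 1 0 6 = 12" using wstep[of 4 2 1 1 0] h5 h4 by (simp del: One_nat_def)
  have h7: "walk 2 1 1 0 7 = 29" using wstep[of 5 2 1 1 0] h6 h5 by (simp del: One_nat_def)
  have h8: "walk 2 1 1 0 8 = 70" using wstep[of 6 2 1 1 0] h7 h6 by (simp del: One_nat_def)
  have h9: "walk 2 1 1 0 9 = 169" using wstep[of 7 2 1 1 0] h8 h7 by (simp del: One_nat_def)
  have h10: "walk 2 1 1 0 10 = 408" using wstep[of 8 2 1 1 0] h9 h8 by (simp del: One_nat_def)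
  have h11: "walk 2 1 1 0 11 = 985" using wstep[of 9 2 1 1 0] h10 h9 by (simp del: One_nat_def)
  have h12: "walk 2 1 1 0 12 = 2378" using wstep[of 10 2 1 1 0] h11 h10 by (simp del: One_nat_def)
  have h13: "walk 2 1 1 0 13 = 5741" using wstep[of 11 2 1 1 0] h12 h11 by (simp del: One_nat_def)
  have h14: "walk 2 1 1 0 14 = 13860" using wstep[of 12 2 1 1 0] h13 h12 by (simp del: One_nat_def)
  have h15: "walk 2 1 1 0 15 = 33461" using wstep[of 13 2 1 1 0] h14 h13 by (simp del: One_nat_def)
  have h16: "walk 2 1 1 0 16 = 80782" using wstep[of 14 2 1 1 0] h15 h14 by (simp del: One_nat_def)
  have h17: "walk 2 1 1 0 17 = 195025" using wstep[of 15 2 1 1 0] h16 h15 by (simp del: One_nat_def)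
  have h18: "walk 2 1 1 0 18 = 470832" using wstep[of 16 2 1 1 0] h17 h16 by (simp del: One_nat_def)
  have h19: "walk 2 1 1 0 19 = 1136689" using wstep[of 17 2 1 1 0] h18 h17 by (simp del: One_nat_def)
  have h20: "walk 2 1 1 0 20 = 2744210" using wstep[of 18 2 1 1 0] h19 h18 by (simp del: One_nat_def)
  have h21: "walk 2 1 1 0 21 = 6625109" using wstep[of 19 2 1 1 0] h20 h19 by (simp del: One_nat_def)
  have h22: "walk 2 1 1 0 22 = 15994428" using wstep[of 20 2 1 1 0] h21 h20 by (simp del: One_nat_def)
  have h23: "walk 2 1 1 0 23 = 38613965" using wstep[of 21 2 1 1 0] h22 h21 by (simp del: One_nat_def)
  have h24: "walk 2 1 1 0 24 = 93222358" using wstep[of 22 2 1 1 0] h23 h22 by (simp del: One_nat_def)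
  have h25: "walk 2 1 1 0 25 = 225058681" using wstep[of 23 2 1 1 0] h24 h23 by (simp del: One_nat_def)
  have h26: "walk 2 1 1 0 26 = 543339720" using wstep[of 24 2 1 1 0] h25 h24 by (simp del: One_nat_def)
  have h27: "walk 2 1 1 0 27 = 1311738121" using wstep[of 25 2 1 1 0] h26 h25 by (simp del: One_nat_def)
  have h28: "walk 2 1 1 0 28 = 3166815962" using wstep[of 26 2 1 1 0] h27 h26 by (simp del: One_nat_def)
  have h29: "walk 2 1 1 0 29 = 7645370045" using wstep[of 27 2 1 1 0] h28 h27 by (simp del: One_nat_def)
  have h30: "walk 2 1 1 0 30 = 18457556052" using wstep[of 28 2 1 1 0] h29 h28 by (simp del: One_nat_def)
  have h31: "walk 2 1 1 0 31 = 44560482149" using wstep[of 29 2 1 1 0] h30 h29 by (simp del: One_nat_def)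
  have h32: "walk 2 1 1 0 32 = 107578520350" using wstep[of 30 2 1 1 0] h31 h30 by (simp del: One_nat_def)
  have h33: "walk 2 1 1 0 33 = 259717522849" using wstep[of 31 2 1 1 0] h32 h31 by (simp del: One_nat_def)
  have h34: "walk 2 1 1 0 34 = 627013566048" using wstep[of 32 2 1 1 0] h33 h32 by (simp del: One_nat_def)
  have h35: "walk 2 1 1 0 35 = 1513744654945" using wstep[of 33 2 1 1 0] h34 h33 by (simp del: One_nat_def)
  have h36: "walk 2 1 1 0 36 = 3654502875938" using wstep[of 34 2 1 1 0] h35 h34 by (simp del: One_nat_def)
  have h37: "walk 2 1 1 0 37 = 8822750406821" using wstep[of 35 2 1 1 0] h36 h35 by (simp del: One_nat_def)
  have h38: "walk 2 1 1 0 38 = 21300003689580" using wstep[of 36 2 1 1 0] h37 h36 by (simp del: One_nat_def)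
  have h39: "walk 2 1 1 0 39 = 51422757785981" using wstep[of 37 2 1 1 0] h38 h37 by (simp del: One_nat_def)
  have h40: "walk 2 1 1 0 40 = 124145519261542" using wstep[of 38 2 1 1 0] h39 h38 by (simp del: One_nat_def)
  have h41: "walk 2 1 1 0 41 = 299713796309065" using wstep[of 39 2 1 1 0] h40 h39 by (simp del: One_nat_def)
  then show ?thesis .
qed


lemma wv3: "walk 2 1 0 1 41 = 723573111879672"
proof -
  have h1: "walk 2 1 0 1 1 = 0" by simp
  have h2: "walk 2 1 0 1 2 = 1" by (simp add: numeral_2_eq_2)
  have h3: "walk 2 1 0 1 3 = 2" using wstep[of 1 2 1 0 1] h2 h1 by (simp del: One_nat_def)
  have h4: "walk 2 1 0 1 4 = 5" using wstep[of 2 2 1 0 1] h3 h2 by (simp del: One_nat_def)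
  have h5: "walk 2 1 0 1 5 = 12" using wstep[of 3 2 1 0 1] h4 h3 by (simp del: One_nat_def)
  have h6: "walk 2 1 0 1 6 = 29" using wstep[of 4 2 1 0 1] h5 h4 by (simp del: One_nat_def)
  have h7: "walk 2 1 0 1 7 = 70" using wstep[of 5 2 1 0 1] h6 h5 by (simp del: One_nat_def)
  have h8: "walk 2 1 0 1 8 = 169" using wstep[of 6 2 1 0 1] h7 h6 by (simp del: One_nat_def)
  have h9: "walk 2 1 0 1 9 = 408" using wstep[of 7 2 1 0 1] h8 h7 by (simp del: One_nat_def)
  have h10: "walk 2 1 0 1 10 = 985" using wstep[of 8 2 1 0 1] h9 h8 by (simp del: One_nat_def)
  have h11: "walk 2 1 0 1 11 = 2378" using wstep[of 9 2 1 0 1] h10 h9 by (simp del: One_nat_def)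
  have h12: "walk 2 1 0 1 12 = 5741" using wstep[of 10 2 1 0 1] h11 h10 by (simp del: One_nat_def)
  have h13: "walk 2 1 0 1 13 = 13860" using wstep[of 11 2 1 0 1] h12 h11 by (simp del: One_nat_def)
  have h14: "walk 2 1 0 1 14 = 33461" using wstep[of 12 2 1 0 1] h13 h12 by (simp del: One_nat_def)
  have h15: "walk 2 1 0 1 15 = 80782" using wstep[of 13 2 1 0 1] h14 h13 by (simp del: One_nat_def)
  have h16: "walk 2 1 0 1 16 = 195025" using wstep[of 14 2 1 0 1] h15 h14 by (simp del: One_nat_def)
  have h17: "walk 2 1 0 1 17 = 470832" using wstep[of 15 2 1 0 1] h16 h15 by (simp del: One_nat_def)
  have h18: "walk 2 1 0 1 18 = 1136689" using wstep[of 16 2 1 0 1] h17 h16 by (simp del: One_nat_def)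
  have h19: "walk 2 1 0 1 19 = 2744210" using wstep[of 17 2 1 0 1] h18 h17 by (simp del: One_nat_def)
  have h20: "walk 2 1 0 1 20 = 6625109" using wstep[of 18 2 1 0 1] h19 h18 by (simp del: One_nat_def)
  have h21: "walk 2 1 0 1 21 = 15994428" using wstep[of 19 2 1 0 1] h20 h19 by (simp del: One_nat_def)
  have h22: "walk 2 1 0 1 22 = 38613965" using wstep[of 20 2 1 0 1] h21 h20 by (simp del: One_nat_def)
  have h23: "walk 2 1 0 1 23 = 93222358" using wstep[of 21 2 1 0 1] h22 h21 by (simp del: One_nat_def)
  have h24: "walk 2 1 0 1 24 = 225058681" using wstep[of 22 2 1 0 1] h23 h22 by (simp del: One_nat_def)
  have h25: "walk 2 1 0 1 25 = 543339720" using wstep[of 23 2 1 0 1] h24 h23 by (simp del: One_nat_def)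
  have h26: "walk 2 1 0 1 26 = 1311738121" using wstep[of 24 2 1 0 1] h25 h24 by (simp del: One_nat_def)
  have h27: "walk 2 1 0 1 27 = 3166815962" using wstep[of 25 2 1 0 1] h26 h25 by (simp del: One_nat_def)
  have h28: "walk 2 1 0 1 28 = 7645370045" using wstep[of 26 2 1 0 1] h27 h26 by (simp del: One_nat_def)
  have h29: "walk 2 1 0 1 29 = 18457556052" using wstep[of 27 2 1 0 1] h28 h27 by (simp del: One_nat_def)
  have h30: "walk 2 1 0 1 30 = 44560482149" using wstep[of 28 2 1 0 1] h29 h28 by (simp del: One_nat_def)
  have h31: "walk 2 1 0 1 31 = 107578520350" using wstep[of 29 2 1 0 1] h30 h29 by (simp del: One_nat_def)
  have h32: "walk 2 1 0 1 32 = 259717522849" using wstep[of 30 2 1 0 1] h31 h30 by (simp del: One_nat_def)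
  have h33: "walk 2 1 0 1 33 = 627013566048" using wstep[of 31 2 1 0 1] h32 h31 by (simp del: One_nat_def)
  have h34: "walk 2 1 0 1 34 = 1513744654945" using wstep[of 32 2 1 0 1] h33 h32 by (simp del: One_nat_def)
  have h35: "walk 2 1 0 1 35 = 3654502875938" using wstep[of 33 2 1 0 1] h34 h33 by (simp del: One_nat_def)
  have h36: "walk 2 1 0 1 36 = 8822750406821" using wstep[of 34 2 1 0 1] h35 h34 by (simp del: One_nat_def)
  have h37: "walk 2 1 0 1 37 = 21300003689580" using wstep[of 35 2 1 0 1] h36 h35 by (simp del: One_nat_def)
  have h38: "walk 2 1 0 1 38 = 51422757785981" using wstep[of 36 2 1 0 1] h37 h36 by (simp del: One_nat_def)
  have h39: "walk 2 1 0 1 39 = 124145519261542" using wstep[of 37 2 1 0 1] h38 h37 by (simp del: One_nat_def)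
  have h40: "walk 2 1 0 1 40 = 299713796309065" using wstep[of 38 2 1 0 1] h39 h38 by (simp del: One_nat_def)
  have h41: "walk 2 1 0 1 41 = 723573111879672" using wstep[of 39 2 1 0 1] h40 h39 by (simp del: One_nat_def)
  then show ?thesis .
qed


lemma wv4: "walk 1 2 1 0 41 = 366503875926"
proof -
  have h1: "walk 1 2 1 0 1 = 1" by simp
  have h2: "walk 1 2 1 0 2 = 0" by (simp add: numeral_2_eq_2)
  have h3: "walk 1 2 1 0 3 = 2" using wstep[of 1 1 2 1 0] h2 h1 by (simp del: One_nat_def)
  have h4: "walk 1 2 1 0 4 = 2" using wstep[of 2 1 2 1 0] h3 h2 by (simp del: One_nat_def)
  have h5: "walk 1 2 1 0 5 = 6" using wstep[of 3 1 2 1 0] h4 h3 by (simp del: One_nat_def)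
  have h6: "walk 1 2 1 0 6 = 10" using wstep[of 4 1 2 1 0] h5 h4 by (simp del: One_nat_def)
  have h7: "walk 1 2 1 0 7 = 22" using wstep[of 5 1 2 1 0] h6 h5 by (simp del: One_nat_def)
  have h8: "walk 1 2 1 0 8 = 42" using wstep[of 6 1 2 1 0] h7 h6 by (simp del: One_nat_def)
  have h9: "walk 1 2 1 0 9 = 86" using wstep[of 7 1 2 1 0] h8 h7 by (simp del: One_nat_def)
  have h10: "walk 1 2 1 0 10 = 170" using wstep[of 8 1 2 1 0] h9 h8 by (simp del: One_nat_def)
  have h11: "walk 1 2 1 0 11 = 342" using wstep[of 9 1 2 1 0] h10 h9 by (simp del: One_nat_def)
  have h12: "walk 1 2 1 0 12 = 682" using wstep[of 10 1 2 1 0] h11 h10 by (simp del: One_nat_def)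
  have h13: "walk 1 2 1 0 13 = 1366" using wstep[of 11 1 2 1 0] h12 h11 by (simp del: One_nat_def)
  have h14: "walk 1 2 1 0 14 = 2730" using wstep[of 12 1 2 1 0] h13 h12 by (simp del: One_nat_def)
  have h15: "walk 1 2 1 0 15 = 5462" using wstep[of 13 1 2 1 0] h14 h13 by (simp del: One_nat_def)
  have h16: "walk 1 2 1 0 16 = 10922" using wstep[of 14 1 2 1 0] h15 h14 by (simp del: One_nat_def)
  have h17: "walk 1 2 1 0 17 = 21846" using wstep[of 15 1 2 1 0] h16 h15 by (simp del: One_nat_def)
  have h18: "walk 1 2 1 0 18 = 43690" using wstep[of 16 1 2 1 0] h17 h16 by (simp del: One_nat_def)
  have h19: "walk 1 2 1 0 19 = 87382" using wstep[of 17 1 2 1 0] h18 h17 by (simp del: One_nat_def)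
  have h20: "walk 1 2 1 0 20 = 174762" using wstep[of 18 1 2 1 0] h19 h18 by (simp del: One_nat_def)
  have h21: "walk 1 2 1 0 21 = 349526" using wstep[of 19 1 2 1 0] h20 h19 by (simp del: One_nat_def)
  have h22: "walk 1 2 1 0 22 = 699050" using wstep[of 20 1 2 1 0] h21 h20 by (simp del: One_nat_def)
  have h23: "walk 1 2 1 0 23 = 1398102" using wstep[of 21 1 2 1 0] h22 h21 by (simp del: One_nat_def)
  have h24: "walk 1 2 1 0 24 = 2796202" using wstep[of 22 1 2 1 0] h23 h22 by (simp del: One_nat_def)
  have h25: "walk 1 2 1 0 25 = 5592406" using wstep[of 23 1 2 1 0] h24 h23 by (simp del: One_nat_def)
  have h26: "walk 1 2 1 0 26 = 11184810" using wstep[of 24 1 2 1 0] h25 h24 by (simp del: One_nat_def)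
  have h27: "walk 1 2 1 0 27 = 22369622" using wstep[of 25 1 2 1 0] h26 h25 by (simp del: One_nat_def)
  have h28: "walk 1 2 1 0 28 = 44739242" using wstep[of 26 1 2 1 0] h27 h26 by (simp del: One_nat_def)
  have h29: "walk 1 2 1 0 29 = 89478486" using wstep[of 27 1 2 1 0] h28 h27 by (simp del: One_nat_def)
  have h30: "walk 1 2 1 0 30 = 178956970" using wstep[of 28 1 2 1 0] h29 h28 by (simp del: One_nat_def)
  have h31: "walk 1 2 1 0 31 = 357913942" using wstep[of 29 1 2 1 0] h30 h29 by (simp del: One_nat_def)
  have h32: "walk 1 2 1 0 32 = 715827882" using wstep[of 30 1 2 1 0] h31 h30 by (simp del: One_nat_def)
  have h33: "walk 1 2 1 0 33 = 1431655766" using wstep[of 31 1 2 1 0] h32 h31 by (simp del: One_nat_def)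
  have h34: "walk 1 2 1 0 34 = 2863311530" using wstep[of 32 1 2 1 0] h33 h32 by (simp del: One_nat_def)
  have h35: "walk 1 2 1 0 35 = 5726623062" using wstep[of 33 1 2 1 0] h34 h33 by (simp del: One_nat_def)
  have h36: "walk 1 2 1 0 36 = 11453246122" using wstep[of 34 1 2 1 0] h35 h34 by (simp del: One_nat_def)
  have h37: "walk 1 2 1 0 37 = 22906492246" using wstep[of 35 1 2 1 0] h36 h35 by (simp del: One_nat_def)
  have h38: "walk 1 2 1 0 38 = 45812984490" using wstep[of 36 1 2 1 0] h37 h36 by (simp del: One_nat_def)
  have h39: "walk 1 2 1 0 39 = 91625968982" using wstep[of 37 1 2 1 0] h38 h37 by (simp del: One_nat_def)
  have h40: "walk 1 2 1 0 40 = 183251937962" using wstep[of 38 1 2 1 0] h39 h38 by (simp del: One_nat_def)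
  have h41: "walk 1 2 1 0 41 = 366503875926" using wstep[of 39 1 2 1 0] h40 h39 by (simp del: One_nat_def)
  then show ?thesis .
qed


lemma wv5: "walk 1 2 0 1 41 = 366503875925"
proof -
  have h1: "walk 1 2 0 1 1 = 0" by simp
  have h2: "walk 1 2 0 1 2 = 1" by (simp add: numeral_2_eq_2)
  have h3: "walk 1 2 0 1 3 = 1" using wstep[of 1 1 2 0 1] h2 h1 by (simp del: One_nat_def)
  have h4: "walk 1 2 0 1 4 = 3" using wstep[of 2 1 2 0 1] h3 h2 by (simp del: One_nat_def)
  have h5: "walk 1 2 0 1 5 = 5" using wstep[of 3 1 2 0 1] h4 h3 by (simp del: One_nat_def)
  have h6: "walk 1 2 0 1 6 = 11" using wstep[of 4 1 2 0 1] h5 h4 by (simp del: One_nat_def)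
  have h7: "walk 1 2 0 1 7 = 21" using wstep[of 5 1 2 0 1] h6 h5 by (simp del: One_nat_def)
  have h8: "walk 1 2 0 1 8 = 43" using wstep[of 6 1 2 0 1] h7 h6 by (simp del: One_nat_def)
  have h9: "walk 1 2 0 1 9 = 85" using wstep[of 7 1 2 0 1] h8 h7 by (simp del: One_nat_def)
  have h10: "walk 1 2 0 1 10 = 171" using wstep[of 8 1 2 0 1] h9 h8 by (simp del: One_nat_def)
  have h11: "walk 1 2 0 1 11 = 341" using wstep[of 9 1 2 0 1] h10 h9 by (simp del: One_nat_def)
  have h12: "walk 1 2 0 1 12 = 683" using wstep[of 10 1 2 0 1] h11 h10 by (simp del: One_nat_def)
  have h13: "walk 1 2 0 1 13 = 1365" using wstep[of 11 1 2 0 1] h12 h11 by (simp del: One_nat_def)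
  have h14: "walk 1 2 0 1 14 = 2731" using wstep[of 12 1 2 0 1] h13 h12 by (simp del: One_nat_def)
  have h15: "walk 1 2 0 1 15 = 5461" using wstep[of 13 1 2 0 1] h14 h13 by (simp del: One_nat_def)
  have h16: "walk 1 2 0 1 16 = 10923" using wstep[of 14 1 2 0 1] h15 h14 by (simp del: One_nat_def)
  have h17: "walk 1 2 0 1 17 = 21845" using wstep[of 15 1 2 0 1] h16 h15 by (simp del: One_nat_def)
  have h18: "walk 1 2 0 1 18 = 43691" using wstep[of 16 1 2 0 1] h17 h16 by (simp del: One_nat_def)
  have h19: "walk 1 2 0 1 19 = 87381" using wstep[of 17 1 2 0 1] h18 h17 by (simp del: One_nat_def)
  have h20: "walk 1 2 0 1 20 = 174763" using wstep[of 18 1 2 0 1] h19 h18 by (simp del: One_nat_def)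
  have h21: "walk 1 2 0 1 21 = 349525" using wstep[of 19 1 2 0 1] h20 h19 by (simp del: One_nat_def)
  have h22: "walk 1 2 0 1 22 = 699051" using wstep[of 20 1 2 0 1] h21 h20 by (simp del: One_nat_def)
  have h23: "walk 1 2 0 1 23 = 1398101" using wstep[of 21 1 2 0 1] h22 h21 by (simp del: One_nat_def)
  have h24: "walk 1 2 0 1 24 = 2796203" using wstep[of 22 1 2 0 1] h23 h22 by (simp del: One_nat_def)
  have h25: "walk 1 2 0 1 25 = 5592405" using wstep[of 23 1 2 0 1] h24 h23 by (simp del: One_nat_def)
  have h26: "walk 1 2 0 1 26 = 11184811" using wstep[of 24 1 2 0 1] h25 h24 by (simp del: One_nat_def)
  have h27: "walk 1 2 0 1 27 = 22369621" using wstep[of 25 1 2 0 1] h26 h25 by (simp del: One_nat_def)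
  have h28: "walk 1 2 0 1 28 = 44739243" using wstep[of 26 1 2 0 1] h27 h26 by (simp del: One_nat_def)
  have h29: "walk 1 2 0 1 29 = 89478485" using wstep[of 27 1 2 0 1] h28 h27 by (simp del: One_nat_def)
  have h30: "walk 1 2 0 1 30 = 178956971" using wstep[of 28 1 2 0 1] h29 h28 by (simp del: One_nat_def)
  have h31: "walk 1 2 0 1 31 = 357913941" using wstep[of 29 1 2 0 1] h30 h29 by (simp del: One_nat_def)
  have h32: "walk 1 2 0 1 32 = 715827883" using wstep[of 30 1 2 0 1] h31 h30 by (simp del: One_nat_def)
  have h33: "walk 1 2 0 1 33 = 1431655765" using wstep[of 31 1 2 0 1] h32 h31 by (simp del: One_nat_def)
  have h34: "walk 1 2 0 1 34 = 2863311531" using wstep[of 32 1 2 0 1] h33 h32 by (simp del: One_nat_def)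
  have h35: "walk 1 2 0 1 35 = 5726623061" using wstep[of 33 1 2 0 1] h34 h33 by (simp del: One_nat_def)
  have h36: "walk 1 2 0 1 36 = 11453246123" using wstep[of 34 1 2 0 1] h35 h34 by (simp del: One_nat_def)
  have h37: "walk 1 2 0 1 37 = 22906492245" using wstep[of 35 1 2 0 1] h36 h35 by (simp del: One_nat_def)
  have h38: "walk 1 2 0 1 38 = 45812984491" using wstep[of 36 1 2 0 1] h37 h36 by (simp del: One_nat_def)
  have h39: "walk 1 2 0 1 39 = 91625968981" using wstep[of 37 1 2 0 1] h38 h37 by (simp del: One_nat_def)
  have h40: "walk 1 2 0 1 40 = 183251937963" using wstep[of 38 1 2 0 1] h39 h38 by (simp del: One_nat_def)
  have h41: "walk 1 2 0 1 41 = 366503875925" using wstep[of 39 1 2 0 1] h40 h39 by (simp del: One_nat_def)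
  then show ?thesis .
qed


lemma wv6: "walk 1 3 1 0 41 = 111676809902268"
proof -
  have h1: "walk 1 3 1 0 1 = 1" by simp
  have h2: "walk 1 3 1 0 2 = 0" by (simp add: numeral_2_eq_2)
  have h3: "walk 1 3 1 0 3 = 3" using wstep[of 1 1 3 1 0] h2 h1 by (simp del: One_nat_def)
  have h4: "walk 1 3 1 0 4 = 3" using wstep[of 2 1 3 1 0] h3 h2 by (simp del: One_nat_def)
  have h5: "walk 1 3 1 0 5 = 12" using wstep[of 3 1 3 1 0] h4 h3 by (simp del: One_nat_def)
  have h6: "walk 1 3 1 0 6 = 21" using wstep[of 4 1 3 1 0] h5 h4 by (simp del: One_nat_def)
  have h7: "walk 1 3 1 0 7 = 57" using wstep[of 5 1 3 1 0] h6 h5 by (simp del: One_nat_def)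
  have h8: "walk 1 3 1 0 8 = 120" using wstep[of 6 1 3 1 0] h7 h6 by (simp del: One_nat_def)
  have h9: "walk 1 3 1 0 9 = 291" using wstep[of 7 1 3 1 0] h8 h7 by (simp del: One_nat_def)
  have h10: "walk 1 3 1 0 10 = 651" using wstep[of 8 1 3 1 0] h9 h8 by (simp del: One_nat_def)
  have h11: "walk 1 3 1 0 11 = 1524" using wstep[of 9 1 3 1 0] h10 h9 by (simp del: One_nat_def)
  have h12: "walk 1 3 1 0 12 = 3477" using wstep[of 10 1 3 1 0] h11 h10 by (simp del: One_nat_def)
  have h13: "walk 1 3 1 0 13 = 8049" using wstep[of 11 1 3 1 0] h12 h11 by (simp del: One_nat_def)
  have h14: "walk 1 3 1 0 14 = 18480" using wstep[of 12 1 3 1 0] h13 h12 by (simp del: One_nat_def)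
  have h15: "walk 1 3 1 0 15 = 42627" using wstep[of 13 1 3 1 0] h14 h13 by (simp del: One_nat_def)
  have h16: "walk 1 3 1 0 16 = 98067" using wstep[of 14 1 3 1 0] h15 h14 by (simp del: One_nat_def)
  have h17: "walk 1 3 1 0 17 = 225948" using wstep[of 15 1 3 1 0] h16 h15 by (simp del: One_nat_def)
  have h18: "walk 1 3 1 0 18 = 520149" using wstep[of 16 1 3 1 0] h17 h16 by (simp del: One_nat_def)
  have h19: "walk 1 3 1 0 19 = 1197993" using wstep[of 17 1 3 1 0] h18 h17 by (simp del: One_nat_def)
  have h20: "walk 1 3 1 0 20 = 2758440" using wstep[of 18 1 3 1 0] h19 h18 by (simp del: One_nat_def)
  have h21: "walk 1 3 1 0 21 = 6352419" using wstep[of 19 1 3 1 0] h20 h19 by (simp del: One_nat_def)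
  have h22: "walk 1 3 1 0 22 = 14627739" using wstep[of 20 1 3 1 0] h21 h20 by (simp del: One_nat_def)
  have h23: "walk 1 3 1 0 23 = 33684996" using wstep[of 21 1 3 1 0] h22 h21 by (simp del: One_nat_def)
  have h24: "walk 1 3 1 0 24 = 77568213" using wstep[of 22 1 3 1 0] h23 h22 by (simp del: One_nat_def)
  have h25: "walk 1 3 1 0 25 = 178623201" using wstep[of 23 1 3 1 0] h24 h23 by (simp del: One_nat_def)
  have h26: "walk 1 3 1 0 26 = 411327840" using wstep[of 24 1 3 1 0] h25 h24 by (simp del: One_nat_def)
  have h27: "walk 1 3 1 0 27 = 947197443" using wstep[of 25 1 3 1 0] h26 h25 by (simp del: One_nat_def)
  have h28: "walk 1 3 1 0 28 = 2181180963" using wstep[of 26 1 3 1 0] h27 h26 by (simp del: One_nat_def)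
  have h29: "walk 1 3 1 0 29 = 5022773292" using wstep[of 27 1 3 1 0] h28 h27 by (simp del: One_nat_def)
  have h30: "walk 1 3 1 0 30 = 11566316181" using wstep[of 28 1 3 1 0] h29 h28 by (simp del: One_nat_def)
  have h31: "walk 1 3 1 0 31 = 26634636057" using wstep[of 29 1 3 1 0] h30 h29 by (simp del: One_nat_def)
  have h32: "walk 1 3 1 0 32 = 61333584600" using wstep[of 30 1 3 1 0] h31 h30 by (simp del: One_nat_def)
  have h33: "walk 1 3 1 0 33 = 141237492771" using wstep[of 31 1 3 1 0] h32 h31 by (simp del: One_nat_def)
  have h34: "walk 1 3 1 0 34 = 325238246571" using wstep[of 32 1 3 1 0] h33 h32 by (simp del: One_nat_def)
  have h35: "walk 1 3 1 0 35 = 748950724884" using wstep[of 33 1 3 1 0] h34 h33 by (simp del: One_nat_def)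
  have h36: "walk 1 3 1 0 36 = 1724665464597" using wstep[of 34 1 3 1 0] h35 h34 by (simp del: One_nat_def)
  have h37: "walk 1 3 1 0 37 = 3971517639249" using wstep[of 35 1 3 1 0] h36 h35 by (simp del: One_nat_def)
  have h38: "walk 1 3 1 0 38 = 9145514033040" using wstep[of 36 1 3 1 0] h37 h36 by (simp del: One_nat_def)
  have h39: "walk 1 3 1 0 39 = 21060066950787" using wstep[of 37 1 3 1 0] h38 h37 by (simp del: One_nat_def)
  have h40: "walk 1 3 1 0 40 = 48496609049907" using wstep[of 38 1 3 1 0] h39 h38 by (simp del: One_nat_def)
  have h41: "walk 1 3 1 0 41 = 111676809902268" using wstep[of 39 1 3 1 0] h40 h39 by (simp del: One_nat_def)
  then show ?thesis .
qed


lemma wv7: "walk 1 3 0 1 41 = 85722212350663"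
proof -
  have h1: "walk 1 3 0 1 1 = 0" by simp
  have h2: "walk 1 3 0 1 2 = 1" by (simp add: numeral_2_eq_2)
  have h3: "walk 1 3 0 1 3 = 1" using wstep[of 1 1 3 0 1] h2 h1 by (simp del: One_nat_def)
  have h4: "walk 1 3 0 1 4 = 4" using wstep[of 2 1 3 0 1] h3 h2 by (simp del: One_nat_def)
  have h5: "walk 1 3 0 1 5 = 7" using wstep[of 3 1 3 0 1] h4 h3 by (simp del: One_nat_def)
  have h6: "walk 1 3 0 1 6 = 19" using wstep[of 4 1 3 0 1] h5 h4 by (simp del: One_nat_def)
  have h7: "walk 1 3 0 1 7 = 40" using wstep[of 5 1 3 0 1] h6 h5 by (simp del: One_nat_def)
  have h8: "walk 1 3 0 1 8 = 97" using wstep[of 6 1 3 0 1] h7 h6 by (simp del: One_nat_def)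
  have h9: "walk 1 3 0 1 9 = 217" using wstep[of 7 1 3 0 1] h8 h7 by (simp del: One_nat_def)
  have h10: "walk 1 3 0 1 10 = 508" using wstep[of 8 1 3 0 1] h9 h8 by (simp del: One_nat_def)
  have h11: "walk 1 3 0 1 11 = 1159" using wstep[of 9 1 3 0 1] h10 h9 by (simp del: One_nat_def)
  have h12: "walk 1 3 0 1 12 = 2683" using wstep[of 10 1 3 0 1] h11 h10 by (simp del: One_nat_def)
  have h13: "walk 1 3 0 1 13 = 6160" using wstep[of 11 1 3 0 1] h12 h11 by (simp del: One_nat_def)
  have h14: "walk 1 3 0 1 14 = 14209" using wstep[of 12 1 3 0 1] h13 h12 by (simp del: One_nat_def)
  have h15: "walk 1 3 0 1 15 = 32689" using wstep[of 13 1 3 0 1] h14 h13 by (simp del: One_nat_def)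
  have h16: "walk 1 3 0 1 16 = 75316" using wstep[of 14 1 3 0 1] h15 h14 by (simp del: One_nat_def)
  have h17: "walk 1 3 0 1 17 = 173383" using wstep[of 15 1 3 0 1] h16 h15 by (simp del: One_nat_def)
  have h18: "walk 1 3 0 1 18 = 399331" using wstep[of 16 1 3 0 1] h17 h16 by (simp del: One_nat_def)
  have h19: "walk 1 3 0 1 19 = 919480" using wstep[of 17 1 3 0 1] h18 h17 by (simp del: One_nat_def)
  have h20: "walk 1 3 0 1 20 = 2117473" using wstep[of 18 1 3 0 1] h19 h18 by (simp del: One_nat_def)
  have h21: "walk 1 3 0 1 21 = 4875913" using wstep[of 19 1 3 0 1] h20 h19 by (simp del: One_nat_def)
  have h22: "walk 1 3 0 1 22 = 11228332" using wstep[of 20 1 3 0 1] h21 h20 by (simp del: One_nat_def)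
  have h23: "walk 1 3 0 1 23 = 25856071" using wstep[of 21 1 3 0 1] h22 h21 by (simp del: One_nat_def)
  have h24: "walk 1 3 0 1 24 = 59541067" using wstep[of 22 1 3 0 1] h23 h22 by (simp del: One_nat_def)
  have h25: "walk 1 3 0 1 25 = 137109280" using wstep[of 23 1 3 0 1] h24 h23 by (simp del: One_nat_def)
  have h26: "walk 1 3 0 1 26 = 315732481" using wstep[of 24 1 3 0 1] h25 h24 by (simp del: One_nat_def)
  have h27: "walk 1 3 0 1 27 = 727060321" using wstep[of 25 1 3 0 1] h26 h25 by (simp del: One_nat_def)
  have h28: "walk 1 3 0 1 28 = 1674257764" using wstep[of 26 1 3 0 1] h27 h26 by (simp del: One_nat_def)
  have h29: "walk 1 3 0 1 29 = 3855438727" using wstep[of 27 1 3 0 1] h28 h27 by (simp del: One_nat_def)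
  have h30: "walk 1 3 0 1 30 = 8878212019" using wstep[of 28 1 3 0 1] h29 h28 by (simp del: One_nat_def)
  have h31: "walk 1 3 0 1 31 = 20444528200" using wstep[of 29 1 3 0 1] h30 h29 by (simp del: One_nat_def)
  have h32: "walk 1 3 0 1 32 = 47079164257" using wstep[of 30 1 3 0 1] h31 h30 by (simp del: One_nat_def)
  have h33: "walk 1 3 0 1 33 = 108412748857" using wstep[of 31 1 3 0 1] h32 h31 by (simp del: One_nat_def)
  have h34: "walk 1 3 0 1 34 = 249650241628" using wstep[of 32 1 3 0 1] h33 h32 by (simp del: One_nat_def)
  have h35: "walk 1 3 0 1 35 = 574888488199" using wstep[of 33 1 3 0 1] h34 h33 by (simp del: One_nat_def)
  have h36: "walk 1 3 0 1 36 = 1323839213083" using wstep[of 34 1 3 0 1] h35 h34 by (simp del: One_nat_def)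
  have h37: "walk 1 3 0 1 37 = 3048504677680" using wstep[of 35 1 3 0 1] h36 h35 by (simp del: One_nat_def)
  have h38: "walk 1 3 0 1 38 = 7020022316929" using wstep[of 36 1 3 0 1] h37 h36 by (simp del: One_nat_def)
  have h39: "walk 1 3 0 1 39 = 16165536349969" using wstep[of 37 1 3 0 1] h38 h37 by (simp del: One_nat_def)
  have h40: "walk 1 3 0 1 40 = 37225603300756" using wstep[of 38 1 3 0 1] h39 h38 by (simp del: One_nat_def)
  have h41: "walk 1 3 0 1 41 = 85722212350663" using wstep[of 39 1 3 0 1] h40 h39 by (simp del: One_nat_def)
  then show ?thesis .
qed


lemma wv8: "walk 1 4 1 1 41 = 13596008554085389"
proof -
  have h1: "walk 1 4 1 1 1 = 1" by simp
  have h2: "walk 1 4 1 1 2 = 1" by (simp add: numeral_2_eq_2)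
  have h3: "walk 1 4 1 1 3 = 5" using wstep[of 1 1 4 1 1] h2 h1 by (simp del: One_nat_def)
  have h4: "walk 1 4 1 1 4 = 9" using wstep[of 2 1 4 1 1] h3 h2 by (simp del: One_nat_def)
  have h5: "walk 1 4 1 1 5 = 29" using wstep[of 3 1 4 1 1] h4 h3 by (simp del: One_nat_def)
  have h6: "walk 1 4 1 1 6 = 65" using wstep[of 4 1 4 1 1] h5 h4 by (simp del: One_nat_def)
  have h7: "walk 1 4 1 1 7 = 181" using wstep[of 5 1 4 1 1] h6 h5 by (simp del: One_nat_def)
  have h8: "walk 1 4 1 1 8 = 441" using wstep[of 6 1 4 1 1] h7 h6 by (simp del: One_nat_def)
  have h9: "walk 1 4 1 1 9 = 1165" using wstep[of 7 1 4 1 1] h8 h7 by (simp del: One_nat_def)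
  have h10: "walk 1 4 1 1 10 = 2929" using wstep[of 8 1 4 1 1] h9 h8 by (simp del: One_nat_def)
  have h11: "walk 1 4 1 1 11 = 7589" using wstep[of 9 1 4 1 1] h10 h9 by (simp del: One_nat_def)
  have h12: "walk 1 4 1 1 12 = 19305" using wstep[of 10 1 4 1 1] h11 h10 by (simp del: One_nat_def)
  have h13: "walk 1 4 1 1 13 = 49661" using wstep[of 11 1 4 1 1] h12 h11 by (simp del: One_nat_def)
  have h14: "walk 1 4 1 1 14 = 126881" using wstep[of 12 1 4 1 1] h13 h12 by (simp del: One_nat_def)
  have h15: "walk 1 4 1 1 15 = 325525" using wstep[of 13 1 4 1 1] h14 h13 by (simp del: One_nat_def)
  have h16: "walk 1 4 1 1 16 = 833049" using wstep[of 14 1 4 1 1] h15 h14 by (simp del: One_nat_def)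
  have h17: "walk 1 4 1 1 17 = 2135149" using wstep[of 15 1 4 1 1] h16 h15 by (simp del: One_nat_def)
  have h18: "walk 1 4 1 1 18 = 5467345" using wstep[of 16 1 4 1 1] h17 h16 by (simp del: One_nat_def)
  have h19: "walk 1 4 1 1 19 = 14007941" using wstep[of 17 1 4 1 1] h18 h17 by (simp del: One_nat_def)
  have h20: "walk 1 4 1 1 20 = 35877321" using wstep[of 18 1 4 1 1] h19 h18 by (simp del: One_nat_def)
  have h21: "walk 1 4 1 1 21 = 91909085" using wstep[of 19 1 4 1 1] h20 h19 by (simp del: One_nat_def)
  have h22: "walk 1 4 1 1 22 = 235418369" using wstep[of 20 1 4 1 1] h21 h20 by (simp del: One_nat_def)
  have h23: "walk 1 4 1 1 23 = 603054709" using wstep[of 21 1 4 1 1] h22 h21 by (simp del: One_nat_def)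
  have h24: "walk 1 4 1 1 24 = 1544728185" using wstep[of 22 1 4 1 1] h23 h22 by (simp del: One_nat_def)
  have h25: "walk 1 4 1 1 25 = 3956947021" using wstep[of 23 1 4 1 1] h24 h23 by (simp del: One_nat_def)
  have h26: "walk 1 4 1 1 26 = 10135859761" using wstep[of 24 1 4 1 1] h25 h24 by (simp del: One_nat_def)
  have h27: "walk 1 4 1 1 27 = 25963647845" using wstep[of 25 1 4 1 1] h26 h25 by (simp del: One_nat_def)
  have h28: "walk 1 4 1 1 28 = 66507086889" using wstep[of 26 1 4 1 1] h27 h26 by (simp del: One_nat_def)
  have h29: "walk 1 4 1 1 29 = 170361678269" using wstep[of 27 1 4 1 1] h28 h27 by (simp del: One_nat_def)
  have h30: "walk 1 4 1 1 30 = 436390025825" using wstep[of 28 1 4 1 1] h29 h28 by (simp del: One_nat_def)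
  have h31: "walk 1 4 1 1 31 = 1117836738901" using wstep[of 29 1 4 1 1] h30 h29 by (simp del: One_nat_def)
  have h32: "walk 1 4 1 1 32 = 2863396842201" using wstep[of 30 1 4 1 1] h31 h30 by (simp del: One_nat_def)
  have h33: "walk 1 4 1 1 33 = 7334743797805" using wstep[of 31 1 4 1 1] h32 h31 by (simp del: One_nat_def)
  have h34: "walk 1 4 1 1 34 = 18788331166609" using wstep[of 32 1 4 1 1] h33 h32 by (simp del: One_nat_def)
  have h35: "walk 1 4 1 1 35 = 48127306357829" using wstep[of 33 1 4 1 1] h34 h33 by (simp del: One_nat_def)
  have h36: "walk 1 4 1 1 36 = 123280631024265" using wstep[of 34 1 4 1 1] h35 h34 by (simp del: One_nat_def)
  have h37: "walk 1 4 1 1 37 = 315789856455581" using wstep[of 35 1 4 1 1] h36 h35 by (simp del: One_nat_def)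
  have h38: "walk 1 4 1 1 38 = 808912380552641" using wstep[of 36 1 4 1 1] h37 h36 by (simp del: One_nat_def)
  have h39: "walk 1 4 1 1 39 = 2072071806374965" using wstep[of 37 1 4 1 1] h38 h37 by (simp del: One_nat_def)
  have h40: "walk 1 4 1 1 40 = 5307721328585529" using wstep[of 38 1 4 1 1] h39 h38 by (simp del: One_nat_def)
  have h41: "walk 1 4 1 1 41 = 13596008554085389" using wstep[of 39 1 4 1 1] h40 h39 by (simp del: One_nat_def)
  then show ?thesis .
qed


lemma wv9: "walk 1 4 1 1 40 = 5307721328585529"
proof -
  have h1: "walk 1 4 1 1 1 = 1" by simp
  have h2: "walk 1 4 1 1 2 = 1" by (simp add: numeral_2_eq_2)
  have h3: "walk 1 4 1 1 3 = 5" using wstep[of 1 1 4 1 1] h2 h1 by (simp del: One_nat_def)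
  have h4: "walk 1 4 1 1 4 = 9" using wstep[of 2 1 4 1 1] h3 h2 by (simp del: One_nat_def)
  have h5: "walk 1 4 1 1 5 = 29" using wstep[of 3 1 4 1 1] h4 h3 by (simp del: One_nat_def)
  have h6: "walk 1 4 1 1 6 = 65" using wstep[of 4 1 4 1 1] h5 h4 by (simp del: One_nat_def)
  have h7: "walk 1 4 1 1 7 = 181" using wstep[of 5 1 4 1 1] h6 h5 by (simp del: One_nat_def)
  have h8: "walk 1 4 1 1 8 = 441" using wstep[of 6 1 4 1 1] h7 h6 by (simp del: One_nat_def)
  have h9: "walk 1 4 1 1 9 = 1165" using wstep[of 7 1 4 1 1] h8 h7 by (simp del: One_nat_def)
  have h10: "walk 1 4 1 1 10 = 2929" using wstep[of 8 1 4 1 1] h9 h8 by (simp del: One_nat_def)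
  have h11: "walk 1 4 1 1 11 = 7589" using wstep[of 9 1 4 1 1] h10 h9 by (simp del: One_nat_def)
  have h12: "walk 1 4 1 1 12 = 19305" using wstep[of 10 1 4 1 1] h11 h10 by (simp del: One_nat_def)
  have h13: "walk 1 4 1 1 13 = 49661" using wstep[of 11 1 4 1 1] h12 h11 by (simp del: One_nat_def)
  have h14: "walk 1 4 1 1 14 = 126881" using wstep[of 12 1 4 1 1] h13 h12 by (simp del: One_nat_def)
  have h15: "walk 1 4 1 1 15 = 325525" using wstep[of 13 1 4 1 1] h14 h13 by (simp del: One_nat_def)
  have h16: "walk 1 4 1 1 16 = 833049" using wstep[of 14 1 4 1 1] h15 h14 by (simp del: One_nat_def)
  have h17: "walk 1 4 1 1 17 = 2135149" using wstep[of 15 1 4 1 1] h16 h15 by (simp del: One_nat_def)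
  have h18: "walk 1 4 1 1 18 = 5467345" using wstep[of 16 1 4 1 1] h17 h16 by (simp del: One_nat_def)
  have h19: "walk 1 4 1 1 19 = 14007941" using wstep[of 17 1 4 1 1] h18 h17 by (simp del: One_nat_def)
  have h20: "walk 1 4 1 1 20 = 35877321" using wstep[of 18 1 4 1 1] h19 h18 by (simp del: One_nat_def)
  have h21: "walk 1 4 1 1 21 = 91909085" using wstep[of 19 1 4 1 1] h20 h19 by (simp del: One_nat_def)
  have h22: "walk 1 4 1 1 22 = 235418369" using wstep[of 20 1 4 1 1] h21 h20 by (simp del: One_nat_def)
  have h23: "walk 1 4 1 1 23 = 603054709" using wstep[of 21 1 4 1 1] h22 h21 by (simp del: One_nat_def)
  have h24: "walk 1 4 1 1 24 = 1544728185" using wstep[of 22 1 4 1 1] h23 h22 by (simp del: One_nat_def)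
  have h25: "walk 1 4 1 1 25 = 3956947021" using wstep[of 23 1 4 1 1] h24 h23 by (simp del: One_nat_def)
  have h26: "walk 1 4 1 1 26 = 10135859761" using wstep[of 24 1 4 1 1] h25 h24 by (simp del: One_nat_def)
  have h27: "walk 1 4 1 1 27 = 25963647845" using wstep[of 25 1 4 1 1] h26 h25 by (simp del: One_nat_def)
  have h28: "walk 1 4 1 1 28 = 66507086889" using wstep[of 26 1 4 1 1] h27 h26 by (simp del: One_nat_def)
  have h29: "walk 1 4 1 1 29 = 170361678269" using wstep[of 27 1 4 1 1] h28 h27 by (simp del: One_nat_def)
  have h30: "walk 1 4 1 1 30 = 436390025825" using wstep[of 28 1 4 1 1] h29 h28 by (simp del: One_nat_def)
  have h31: "walk 1 4 1 1 31 = 1117836738901" using wstep[of 29 1 4 1 1] h30 h29 by (simp del: One_nat_def)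
  have h32: "walk 1 4 1 1 32 = 2863396842201" using wstep[of 30 1 4 1 1] h31 h30 by (simp del: One_nat_def)
  have h33: "walk 1 4 1 1 33 = 7334743797805" using wstep[of 31 1 4 1 1] h32 h31 by (simp del: One_nat_def)
  have h34: "walk 1 4 1 1 34 = 18788331166609" using wstep[of 32 1 4 1 1] h33 h32 by (simp del: One_nat_def)
  have h35: "walk 1 4 1 1 35 = 48127306357829" using wstep[of 33 1 4 1 1] h34 h33 by (simp del: One_nat_def)
  have h36: "walk 1 4 1 1 36 = 123280631024265" using wstep[of 34 1 4 1 1] h35 h34 by (simp del: One_nat_def)
  have h37: "walk 1 4 1 1 37 = 315789856455581" using wstep[of 35 1 4 1 1] h36 h35 by (simp del: One_nat_def)
  have h38: "walk 1 4 1 1 38 = 808912380552641" using wstep[of 36 1 4 1 1] h37 h36 by (simp del: One_nat_def)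
  have h39: "walk 1 4 1 1 39 = 2072071806374965" using wstep[of 37 1 4 1 1] h38 h37 by (simp del: One_nat_def)
  have h40: "walk 1 4 1 1 40 = 5307721328585529" using wstep[of 38 1 4 1 1] h39 h38 by (simp del: One_nat_def)
  then show ?thesis .
qed



lemma ex14: "(1::nat, 4::nat) \<in> S_set 5307721328585529"
proof (rule mem_from[where K = 40])
  show "40 \<le> sig 1 4 5307721328585529" by (rule wit[of _ _ 1 1]) (simp_all del: One_nat_def add: wv0 wv1 wv2 wv3 wv4 wv5 wv6 wv7 wv8 wv9)
  show "sig 1 1 5307721328585529 \<le> 40"
    by (rule sig_le_lin[where A = 63245986 and B = 102334155 and u = 63245986 and r = 101682819]) (simp_all del: One_nat_def add: wv0 wv1 wv2 wv3 wv4 wv5 wv6 wv7 wv8 wv9)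
  show "sig 2 1 5307721328585529 \<le> 40"
    by (rule sig_le_lin[where A = 299713796309065 and B = 723573111879672 and u = 299713796309065 and r = 677885750518689]) (simp_all del: One_nat_def add: wv0 wv1 wv2 wv3 wv4 wv5 wv6 wv7 wv8 wv9)
  show "sig 1 2 5307721328585529 \<le> 40"
    by (rule sig_le_lin[where A = 366503875926 and B = 366503875925 and u = 1 and r = 12197439679]) (simp_all del: One_nat_def add: wv0 wv1 wv2 wv3 wv4 wv5 wv6 wv7 wv8 wv9)
  show "sig 1 3 5307721328585529 \<le> 40"
    by (rule sig_le_lin[where A = 111676809902268 and B = 85722212350663 and u = 44390082241922 and r = 13286448643510]) (simp_all del: One_nat_def add: wv0 wv1 wv2 wv3 wv4 wv5 wv6 wv7 wv8 wv9)
  show "sig 1 4 5307721328585529 \<le> 40" by (rule sig_le_size) (simp_all del: One_nat_def add: wv0 wv1 wv2 wv3 wv4 wv5 wv6 wv7 wv8 wv9)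
qed simp_all




lemma pow_grow:
  assumes "1 \<le> al" "1 \<le> be" "2 \<le> al \<or> 2 \<le> be"
    "1 \<le> walk al be a1 a2 3" "2 \<le> walk al be a1 a2 4"
  shows "2 ^ d \<le> walk al be a1 a2 (d + 3) \<and> 2 ^ Suc d \<le> walk al be a1 a2 (d + 4)"
proof (induction d)
  case 0 then show ?case using assms(4,5) by simp
next
  case (Suc d)
  let ?w = "walk al be a1 a2"
  have e: "?w (Suc d + 4) = al * ?w (d + 4) + be * ?w (d + 3)"
    by (simp add: numeral_eq_Suc)
  have "2 ^ Suc (Suc d) \<le> al * ?w (d + 4) + be * ?w (d + 3)"
    using assms(3)
  proof
    assume a: "2 \<le> al"
    have "2 * ?w (d + 4) \<le> al * ?w (d + 4)" using a by (rule mult_le_mono1)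
    moreover have "2 ^ Suc (Suc d) = 2 * (2::nat) ^ Suc d" by simp
    ultimately show ?thesis using Suc by linarith
  next
    assume b: "2 \<le> be"
    have "?w (d + 4) \<le> al * ?w (d + 4)" using assms(1) by simp
    moreover have "2 * ?w (d + 3) \<le> be * ?w (d + 3)" using b by (rule mult_le_mono1)
    moreover have "2 ^ Suc (Suc d) = 2 * (2::nat) ^ Suc d" "2 ^ Suc d = 2 * (2::nat) ^ d" by simp_all
    ultimately show ?thesis using Suc by linarith
  qed
  then show ?case using Suc e by (simp add: numeral_eq_Suc)
qed

lemma AB_bound:
  assumes "(al, be) \<in> {(2::nat,1::nat),(1,2),(1,3),(1,4)}" "3 \<le> m"
  shows "2 ^ (m - 3) \<le> walk al be 1 0 m \<and> 2 ^ (m - 3) \<le> walk al be 0 1 m"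
proof -
  have p: "1 \<le> al" "1 \<le> be" "2 \<le> al \<or> 2 \<le> be" using assms(1) by auto
  have m: "m = (m - 3) + 3" using assms(2) by simp
  have a3: "1 \<le> walk al be 1 0 3" "2 \<le> walk al be 1 0 4"
    using assms(1) by (auto simp: numeral_eq_Suc)
  have b3: "1 \<le> walk al be 0 1 3" "2 \<le> walk al be 0 1 4"
    using assms(1) by (auto simp: numeral_eq_Suc)
  show ?thesis
    using pow_grow[OF p a3, of "m - 3"] pow_grow[OF p b3, of "m - 3"] m by metis
qed

definition Rep :: "nat \<Rightarrow> nat \<Rightarrow> nat \<Rightarrow> nat \<Rightarrow> nat set" where
  "Rep al be m N = {n. n \<le> N \<and> (\<exists>b1 b2. 1 \<le> b1 \<and> 1 \<le> b2 \<and> n = b1 * walk al be 1 0 m + b2 * walk al be 0 1 m)}"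

lemma card_Rep:
  assumes "1 \<le> walk al be 1 0 m" "1 \<le> walk al be 0 1 m"
  shows "card (Rep al be m N) \<le> (N div walk al be 1 0 m) * (N div walk al be 0 1 m)"
proof -
  let ?A = "walk al be 1 0 m" and ?B = "walk al be 0 1 m"
  have "Rep al be m N \<subseteq> (\<lambda>(b1, b2). b1 * ?A + b2 * ?B) ` ({1..N div ?A} \<times> {1..N div ?B})"
  proof
    fix n assume "n \<in> Rep al be m N"
    then obtain b1 b2 where b: "n \<le> N" "1 \<le> b1" "1 \<le> b2" "n = b1 * ?A + b2 * ?B"
      unfolding Rep_def by blast
    have "b1 * ?A \<le> N" using b by simp
    then have "b1 \<le> N div ?A" using assms(1) by (simp add: less_eq_div_iff_mult_less_eq)
    moreover have "b2 * ?B \<le> N" using b by simp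
    then have "b2 \<le> N div ?B" using assms(2) by (simp add: less_eq_div_iff_mult_less_eq)
    ultimately show "n \<in> (\<lambda>(b1, b2). b1 * ?A + b2 * ?B) ` ({1..N div ?A} \<times> {1..N div ?B})"
      using b by force
  qed
  then have "card (Rep al be m N) \<le> card ((\<lambda>(b1, b2). b1 * ?A + b2 * ?B) ` ({1..N div ?A} \<times> {1..N div ?B}))"
    by (intro card_mono) auto
  also have "\<dots> \<le> card ({1..N div ?A} \<times> {1..N div ?B})" by (rule card_image_le) auto
  also have "\<dots> = (N div ?A) * (N div ?B)" by (simp add: card_cartesian_product)
  finally show ?thesis .
qed

lemma bad_in_Rep:
  assumes "2 \<le> j" "fib (j - 1) * fib j < n" "n \<le> N" "S_set n \<noteq> {(1,1)}"
  shows "\<exists>q\<in>{(2::nat,1::nat),(1,2),(1,3),(1,4)}. n \<in> Rep (fst q) (snd q) (Suc j) N"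
proof -
  have "0 < fib (j - 1)" "0 < fib j" using fib_neq_0_nat[of "j - 1"] fib_neq_0_nat[of j] assms(1)
    by simp_all
  then have "1 \<le> fib (j - 1) * fib j" by (simp add: Suc_le_eq)
  then have n2: "2 \<le> n" using assms(2) by linarith
  obtain q where q: "q \<in> {(2::nat,1::nat),(1,2),(1,3),(1,4)}" "sig 1 1 n \<le> sig (fst q) (snd q) n"
    using bad[OF n2 assms(4)] by blast
  have q1: "1 \<le> fst q" "1 \<le> snd q" using q(1) by auto
  have "Suc j \<le> sig 1 1 n" by (rule sig11_ge[OF assms(1,2)])
  then have "Suc j \<le> sig (fst q) (snd q) n" using q(2) by simp
  from sig_shift[OF q1 _ _ this] n2 obtain b1 b2 where
    b: "1 \<le> b1" "1 \<le> b2" "walk (fst q) (snd q) b1 b2 (Suc j) = n" by auto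
  have "n = b1 * walk (fst q) (snd q) 1 0 (Suc j) + b2 * walk (fst q) (snd q) 0 1 (Suc j)"
    using walk_lin[of "fst q" "snd q" b1 b2 "Suc j"] b(3) by simp
  then have "n \<in> Rep (fst q) (snd q) (Suc j) N" unfolding Rep_def using b assms(3) by blast
  then show ?thesis using q(1) by blast
qed




definition Bad :: "nat \<Rightarrow> nat set" where
  "Bad N = {n. 1 \<le> n \<and> n \<le> N \<and> S_set n \<noteq> {(1,1)}}"

lemma bad_card:
  assumes "1 \<le> i" "12 ^ i \<le> N"
  shows "card (Bad N) \<le> 9 ^ i + 4 * (N div 4 ^ (i - 1)) ^ 2"
proof -
  define j where "j = 2 * i"
  have j2: "2 \<le> j" using assms(1) unfolding j_def by simp
  let ?R = "{(2::nat,1::nat),(1,2),(1,3),(1,4)}"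
  have fb: "fib (j - 1) * fib j \<le> 9 ^ i"
  proof -
    have "fib (j - 1) * fib j \<le> fib j * fib j" using fib_mono[of "j - 1" j] by simp
    also have "\<dots> = fib j ^ 2" by (simp add: power2_eq_square)
    also have "\<dots> \<le> 3 ^ j" by (rule fib_sq)
    also have "\<dots> = 9 ^ i" unfolding j_def by (simp add: power_mult)
    finally show ?thesis .
  qed
  have sub: "Bad N \<subseteq> {1..9 ^ i} \<union> (\<Union>q\<in>?R. Rep (fst q) (snd q) (Suc j) N)"
  proof
    fix n assume n: "n \<in> Bad N"
    show "n \<in> {1..9 ^ i} \<union> (\<Union>q\<in>?R. Rep (fst q) (snd q) (Suc j) N)"
    proof (cases "n \<le> 9 ^ i")
      case True then show ?thesis using n unfolding Bad_def by auto
    next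
      case False
      then have "fib (j - 1) * fib j < n" using fb by linarith
      from bad_in_Rep[OF j2 this] n show ?thesis unfolding Bad_def by blast
    qed
  qed
  have finR: "finite (Rep al be m N)" for al be m
    unfolding Rep_def by (rule finite_subset[of _ "{..N}"]) auto
  have "card (Bad N) \<le> card ({1..9 ^ i} \<union> (\<Union>q\<in>?R. Rep (fst q) (snd q) (Suc j) N))"
    by (rule card_mono[OF _ sub]) (use finR in auto)
  also have "\<dots> \<le> card {1..(9::nat) ^ i} + card (\<Union>q\<in>?R. Rep (fst q) (snd q) (Suc j) N)"
    by (rule card_Un_le)
  also have "card (\<Union>q\<in>?R. Rep (fst q) (snd q) (Suc j) N) \<le> (\<Sum>q\<in>?R. card (Rep (fst q) (snd q) (Suc j) N))"
    by (rule card_UN_le) simp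
  also have "\<dots> \<le> of_nat (card ?R) * (N div 4 ^ (i - 1)) ^ 2"
  proof (rule sum_bounded_above)
    fix q assume q: "q \<in> ?R"
    let ?A = "walk (fst q) (snd q) 1 0 (Suc j)" and ?B = "walk (fst q) (snd q) 0 1 (Suc j)"
    have qq: "(fst q, snd q) \<in> ?R" using q by simp
    have ab: "2 ^ (Suc j - 3) \<le> ?A \<and> 2 ^ (Suc j - 3) \<le> ?B"
      by (rule AB_bound[OF qq]) (use j2 in simp)
    have pw: "(2::nat) ^ (Suc j - 3) = 4 ^ (i - 1)"
    proof -
      have "Suc j - 3 = 2 * (i - 1)" unfolding j_def using assms(1) by simp
      then show ?thesis by (simp add: power_mult)
    qed
    have D: "0 < (4::nat) ^ (i - 1)" by simp
    have A1: "4 ^ (i - 1) \<le> ?A" "4 ^ (i - 1) \<le> ?B" using ab pw by auto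
    then have A2: "1 \<le> ?A" "1 \<le> ?B" using D by linarith+
    have "card (Rep (fst q) (snd q) (Suc j) N) \<le> (N div ?A) * (N div ?B)"
      by (rule card_Rep[OF A2])
    also have "\<dots> \<le> (N div 4 ^ (i - 1)) * (N div 4 ^ (i - 1))"
      by (intro mult_le_mono div_le_mono2 D A1)
    finally show "card (Rep (fst q) (snd q) (Suc j) N) \<le> (N div 4 ^ (i - 1)) ^ 2"
      by (simp add: power2_eq_square)
  qed
  also have "card ?R = 4" by simp
  finally show ?thesis by simp
qed

lemma ratio_bound:
  assumes "1 \<le> i" "12 ^ i \<le> N" "N < 12 ^ (i + 1)"
  shows "real (card (Bad N)) / real N \<le> 769 * (3 / 4) ^ i"
proof -
  obtain k where k: "i = Suc k" using assms(1) by (cases i) auto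
  have r12: "real (12 ^ i) \<le> real N" using assms(2) by (simp only: of_nat_le_iff)
  then have r12': "(12::real) ^ i \<le> real N" by simp
  have "(0::real) < 12 ^ i" by simp
  then have Npos: "0 < real N" using r12' by linarith
  have c0: "real (card (Bad N)) \<le> real (9 ^ i + 4 * (N div 4 ^ (i - 1)) ^ 2)"
    using bad_card[OF assms(1,2)] by (simp only: of_nat_le_iff)
  then have c: "real (card (Bad N)) \<le> 9 ^ i + 4 * real (N div 4 ^ (i - 1)) ^ 2" by simp
  have d: "real (N div 4 ^ (i - 1)) \<le> real N / 4 ^ (i - 1)"
    using of_nat_div_le_of_nat[of N "4 ^ (i - 1)"] by simp
  have d2: "real (N div 4 ^ (i - 1)) ^ 2 \<le> (real N / 4 ^ (i - 1)) ^ 2"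
    by (rule power_mono[OF d]) simp
  have e4: "(4::real) ^ (i - 1) * 4 = 4 ^ i" unfolding k by simp
  have e16: "((4::real) ^ i) ^ 2 = 16 ^ i"
    by (simp add: power2_eq_square power_mult_distrib[symmetric])
  have "(real N / 4 ^ (i - 1)) ^ 2 = 16 * real N ^ 2 / 16 ^ i"
  proof -
    have "(real N / 4 ^ (i - 1)) = 4 * real N / 4 ^ i" using e4[symmetric] by (simp add: field_simps)
    then have "(real N / 4 ^ (i - 1)) ^ 2 = 16 * real N ^ 2 / (4 ^ i) ^ 2"
      by (simp add: power_divide power_mult_distrib)
    then show ?thesis using e16 by simp
  qed
  then have c2: "real (card (Bad N)) \<le> 9 ^ i + 64 * real N ^ 2 / 16 ^ i" using c d2 by simp
  have t1: "9 ^ i / real N \<le> (3 / 4) ^ i"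
  proof -
    have "(9::real) ^ i / real N \<le> 9 ^ i / 12 ^ i"
      using r12' Npos by (intro divide_left_mono) simp_all
    also have "\<dots> = (3 / 4) ^ i" by (simp add: power_divide[symmetric])
    finally show ?thesis .
  qed
  have t2: "64 * real N / 16 ^ i \<le> 768 * (3 / 4) ^ i"
  proof -
    have "real N \<le> real (12 ^ (i + 1))" using assms(3) by (simp only: of_nat_le_iff less_imp_le)
    then have N12: "real N \<le> 12 ^ (i + 1)" by simp
    have "64 * real N / 16 ^ i \<le> 64 * 12 ^ (i + 1) / 16 ^ i"
      using N12 by (intro divide_right_mono) simp_all
    also have "\<dots> = 768 * (12 ^ i / 16 ^ i)" by simp
    also have "(12::real) ^ i / 16 ^ i = (3 / 4) ^ i" by (simp add: power_divide[symmetric])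
    finally show ?thesis by simp
  qed
  have "real (card (Bad N)) / real N \<le> (9 ^ i + 64 * real N ^ 2 / 16 ^ i) / real N"
    using c2 Npos by (intro divide_right_mono) simp_all
  also have "\<dots> = 9 ^ i / real N + 64 * real N / 16 ^ i"
    using Npos by (simp add: field_simps power2_eq_square)
  also have "\<dots> \<le> 769 * (3 / 4) ^ i" using t1 t2 by simp
  finally show ?thesis .
qed




lemma split_card:
  fixes P :: "nat \<Rightarrow> bool"
  shows "card {n. 1 \<le> n \<and> n \<le> N \<and> P n} + card {n. 1 \<le> n \<and> n \<le> N \<and> \<not> P n} = N"
proof -
  have U: "{n. 1 \<le> n \<and> n \<le> N \<and> P n} \<union> {n. 1 \<le> n \<and> n \<le> N \<and> \<not> P n} = {1..N}" by auto
  have D: "{n. 1 \<le> n \<and> n \<le> N \<and> P n} \<inter> {n. 1 \<le> n \<and> n \<le> N \<and> \<not> P n} = {}" by auto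
  have f1: "finite {n. 1 \<le> n \<and> n \<le> N \<and> P n}" by (rule finite_subset[of _ "{..N}"]) auto
  have f2: "finite {n. 1 \<le> n \<and> n \<le> N \<and> \<not> P n}" by (rule finite_subset[of _ "{..N}"]) auto
  have "card ({n. 1 \<le> n \<and> n \<le> N \<and> P n} \<union> {n. 1 \<le> n \<and> n \<le> N \<and> \<not> P n})
      = card {n. 1 \<le> n \<and> n \<le> N \<and> P n} + card {n. 1 \<le> n \<and> n \<le> N \<and> \<not> P n}"
    by (rule card_Un_disjoint[OF f1 f2 D])
  then show ?thesis unfolding U by simp
qed

lemma good_card:
  "card {n. 1 \<le> n \<and> n \<le> N \<and> S_set n = {(1,1)}} + card (Bad N) = N"
  unfolding Bad_def using split_card[of N "\<lambda>n. S_set n = {(1,1)}"] by simp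


lemma density:
  "(\<lambda>N. real (card {n::nat. 1 \<le> n \<and> n \<le> N \<and> S_set n = {(1,1)}}) / real N) \<longlonglongrightarrow> 1"
proof (rule LIMSEQ_I)
  fix r :: real assume r: "0 < r"
  obtain M where M: "(3 / 4 :: real) ^ M < r / 769"
    using real_arch_pow_inv[of "r / 769" "3 / 4"] r by auto
  show "\<exists>no. \<forall>N\<ge>no. norm (real (card {n. 1 \<le> n \<and> n \<le> N \<and> S_set n = {(1,1)}}) / real N - 1) < r"
  proof (intro exI allI impI)
    fix N :: nat assume N: "12 ^ (M + 1) \<le> N"
    have "(1::nat) \<le> 12 ^ (M + 1)" by simp
    then have N1: "1 \<le> N" using N by linarith
    obtain i where i: "12 ^ i \<le> N" "N < 12 ^ (i + 1)"
      using ex_power_ivl1[of 12 N] N1 by auto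
    have "(12::nat) ^ (M + 1) < 12 ^ (i + 1)" using N i(2) by linarith
    then have "M + 1 < i + 1" by (rule power_less_imp_less_exp[rotated]) simp
    then have iM: "M \<le> i" "1 \<le> i" by simp_all
    have Npos: "0 < real N" using N1 by simp
    define g where "g = card {n. 1 \<le> n \<and> n \<le> N \<and> S_set n = {(1,1)}}"
    define b where "b = card (Bad N)"
    have gb: "real g + real b = real N" using good_card[of N] unfolding g_def b_def
      by (metis of_nat_add)
    have gg: "real g = real N - real b" using gb by linarith
    have "real g / real N - 1 = - (real b / real N)"
      unfolding gg using Npos by (simp add: field_simps)
    then have "norm (real g / real N - 1) = real b / real N"
      by simp
    also have "\<dots> \<le> 769 * (3 / 4) ^ i" unfolding b_def by (rule ratio_bound[OF iM(2) i])
    also have "\<dots> \<le> 769 * (3 / 4) ^ M" using iM(1) by (simp add: power_decreasing)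
    also have "\<dots> < r" using M by simp
    finally show "norm (real (card {n. 1 \<le> n \<and> n \<le> N \<and> S_set n = {(1,1)}}) / real N - 1) < r"
      unfolding g_def .
  qed
qed


theorem theorem1p6:
  defines "R \<equiv> {(1,1),(2,1),(1,2),(1,3),(1,4)} :: (nat \<times> nat) set"
  shows "(\<forall>n::nat. n > 1 \<longrightarrow> S_set n \<subseteq> R)
    \<and> (\<forall>p\<in>R. \<exists>n::nat. n > 1 \<and> p \<in> S_set n)
    \<and> (\<lambda>N. real (card {n::nat. 1 \<le> n \<and> n \<le> N \<and> S_set n = {(1,1)}}) / real N)
         \<longlonglongrightarrow> 1"
proof (intro conjI)
  show "\<forall>n::nat. n > 1 \<longrightarrow> S_set n \<subseteq> R"
  proof (intro allI impI)
    fix n :: nat assume "n > 1"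
    then show "S_set n \<subseteq> R" unfolding R_def by (rule part1)
  qed
  show "\<forall>p\<in>R. \<exists>n::nat. n > 1 \<and> p \<in> S_set n"
  proof
    fix p assume "p \<in> R"
    then have "p = (1,1) \<or> p = (2,1) \<or> p = (1,2) \<or> p = (1,3) \<or> p = (1,4)" unfolding R_def by blast
    then show "\<exists>n::nat. n > 1 \<and> p \<in> S_set n"
    proof (elim disjE)
      assume p: "p = (1,1)" show ?thesis unfolding p by (rule exI[of _ 2], rule conjI, simp, rule ex11)
    next
      assume p: "p = (2,1)" show ?thesis unfolding p by (rule exI[of _ 239], rule conjI, simp, rule ex21)
    next
      assume p: "p = (1,2)" show ?thesis unfolding p by (rule exI[of _ 32], rule conjI, simp, rule ex12)
    next
      assume p: "p = (1,3)" show ?thesis unfolding p by (rule exI[of _ 40], rule conjI, simp, rule ex13)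
    next
      assume p: "p = (1,4)" show ?thesis unfolding p by (rule exI[of _ 5307721328585529], rule conjI, simp, rule ex14)
    qed
  qed
  show "(\<lambda>N. real (card {n::nat. 1 \<le> n \<and> n \<le> N \<and> S_set n = {(1,1)}}) / real N) \<longlonglongrightarrow> 1"
    by (rule density)
qed


end
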